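(* Fix a $\rho$-flag on $V$ with adapted basis $v_1,\dots,v_n$; a $G$-graded structure on it is given by an arbitrary tuple $(h_1,\dots,h_n)\in G^n$ with $\deg v_i=h_i$. Let $\mathcal F$ and $\mathcal F'$ be the $G$-graded $\rho$-flags given by $(h_i)$ and $(h'_i)$. Then ${\rm END}(\mathcal F)\cong{\rm END}(\mathcal F')$ as $G$-graded algebras if and only if $(h_i)$ and $(h'_i)$ lie in the same orbit of the right action of the group $\prod_{\alpha\in\mathcal C}S(\alpha)\rtimes({\rm Aut}_0(\mathcal C)\ltimes G^q)$ on $G^n$ described in the context; equivalently, iff there exist $(\psi_\alpha)_{\alpha\in\mathcal C}\in\prod_{\alpha}S(\alpha)$, $g\in{\rm Aut}_0(\mathcal C)$ and $(\sigma_t)_{1\le t\le q}\in G^q$ such that $h'_i=h_{\psi_{g(\hat i)}(\tilde g(i))}\,\sigma_{p(i)}$ for all $1\le i\le n$, where $p(i)$ is the index with $\hat i\in\mathcal C^{p(i)}$. Thus the isomorphism classes of $G$-graded algebras ${\rm END}(\mathcal F)$, $\mathcal F$ a $G$-graded $\rho$-flag, correspond bijectively to the orbits of this action.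
   Context: Let $k$ be a field, $G$ a group, $\rho$ a preorder on $\{1,\dots,n\}$; $i\sim j$ iff $i\rho j$ and $j\rho i$; $\mathcal C$ is the set of classes, $\hat i$ the class of $i$, ordered by $\hat i\le\hat j$ iff $i\rho j$; $m_\alpha=|\alpha|$. A $\rho$-flag $(V,(V_\alpha)_{\alpha\in\mathcal C})$ is an $n$-dimensional $k$-space with subspaces $V_\alpha$ having a basis $v_1,\dots,v_n$ with $\{v_i:\hat i\le\alpha\}$ a basis of $V_\alpha$ for all $\alpha$ (adapted basis). A $G$-graded $\rho$-flag is a $\rho$-flag where $V$ is $G$-graded and the adapted basis is homogeneous. ${\rm END}(\mathcal F)$ is the algebra of linear $f:V\to V$ with $f(V_\alpha)\subseteq V_\alpha$, graded by ${\rm END}(\mathcal F)_\sigma=\{f: f(V_h)\subseteq V_{\sigma h}\ \forall h\in G\}$. ${\rm Aut}_0(\mathcal C)$ is the group of poset automorphisms $g$ of $\mathcal C$ with $m_{g(\alpha)}=m_\alpha$; for such $g$, $\tilde g\in S_n$ is given by: if $\alpha=\{i_1<\dots<i_r\}$ and $g(\alpha)=\{j_1<\dots<j_r\}$ then $\tilde g(i_s)=j_s$. $\mathcal C^1,\dots,\mathcal C^q$ are the connected components of $\mathcal C$ (of its comparability graph), and $\tau_g\in S_q$ is defined by $g(\mathcal C^t)=\mathcal C^{\tau_g(t)}$. $S(\alpha)$ is the symmetric group on the subset $\alpha\subseteq\{1,\dots,n\}$. Right actions on $G^n$: $(h_i)\leftarrow g=(h_{\tilde g(i)})_i$; $(h_i)\leftarrow(\sigma_t)=(h_i\sigma_{p(i)})_i$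 with $\hat i\in\mathcal C^{p(i)}$; $(h_i)\leftarrow(\psi_\alpha)=(h_{\psi_{\hat i}(i)})_i$. ${\rm Aut}_0(\mathcal C)$ acts on the right on $G^q$ by $(\sigma_t)\leftarrow g=(\sigma_{\tau_g(t)})_t$, giving ${\rm Aut}_0(\mathcal C)\ltimes G^q$; ${\rm Aut}_0(\mathcal C)$ acts on the left on $\prod_\alpha S(\alpha)$ by $g\to(\psi_\alpha)=(\psi'_\alpha)$ with $\psi'_\alpha(i)=\tilde g(\psi_{g^{-1}(\alpha)}(\tilde g^{-1}(i)))$ (and $G^q$ acts trivially), giving $\prod_\alpha S(\alpha)\rtimes({\rm Aut}_0(\mathcal C)\ltimes G^q)$. Its right action on $G^n$ is $(h_i)\leftarrow((\psi_\alpha)\rtimes(g\ltimes(\sigma_t)))=(((h_i)\leftarrow(\psi_\alpha))\leftarrow g)\leftarrow(\sigma_t)$. *)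

theory Defs
  imports Complex_Main "HOL-Combinatorics.Permutations"
begin

text \<open>Indices run over 0..<n (instead of 1..n). The group G is a type of class group_add,
  written additively (not necessarily commutative); the paper's product x y is x + y.\<close>

text \<open>Class of i under the equivalence induced by the preorder rho.\<close>
definition cls :: "(nat \<Rightarrow> nat \<Rightarrow> bool) \<Rightarrow> nat \<Rightarrow> nat \<Rightarrow> nat set" where
  "cls \<rho> n i = {j. j < n \<and> \<rho> i j \<and> \<rho> j i}"

definition classes :: "(nat \<Rightarrow> nat \<Rightarrow> bool) \<Rightarrow> nat \<Rightarrow> nat set set" where
  "classes \<rho> n = cls \<rho> n ` {0..<n}"

text \<open>Order on classes: hat i <= hat j iff i rho j.\<close>
definition cle :: "(nat \<Rightarrow> nat \<Rightarrow> bool) \<Rightarrow> nat set \<Rightarrow> nat set \<Rightarrow> bool" where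
  "cle \<rho> \<alpha> \<beta> = (\<exists>i\<in>\<alpha>. \<exists>j\<in>\<beta>. \<rho> i j)"

text \<open>Aut_0(C): poset automorphisms of C preserving the sizes of classes.\<close>
definition Aut0 :: "(nat \<Rightarrow> nat \<Rightarrow> bool) \<Rightarrow> nat \<Rightarrow> (nat set \<Rightarrow> nat set) set" where
  "Aut0 \<rho> n = {g. bij_betw g (classes \<rho> n) (classes \<rho> n)
      \<and> (\<forall>\<alpha>\<in>classes \<rho> n. \<forall>\<beta>\<in>classes \<rho> n. cle \<rho> \<alpha> \<beta> \<longleftrightarrow> cle \<rho> (g \<alpha>) (g \<beta>))
      \<and> (\<forall>\<alpha>\<in>classes \<rho> n. card (g \<alpha>) = card \<alpha>)}"

text \<open>g tilde: the s-th smallest element of hat i goes to the s-th smallest element of g(hat i).\<close>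
definition gtilde :: "(nat \<Rightarrow> nat \<Rightarrow> bool) \<Rightarrow> nat \<Rightarrow> (nat set \<Rightarrow> nat set) \<Rightarrow> nat \<Rightarrow> nat" where
  "gtilde \<rho> n g i = sorted_list_of_set (g (cls \<rho> n i)) ! card {j \<in> cls \<rho> n i. j < i}"

text \<open>Comparability graph on C and its connected components.\<close>
definition comparable :: "(nat \<Rightarrow> nat \<Rightarrow> bool) \<Rightarrow> nat \<Rightarrow> nat set \<Rightarrow> nat set \<Rightarrow> bool" where
  "comparable \<rho> n \<alpha> \<beta> = (\<alpha> \<in> classes \<rho> n \<and> \<beta> \<in> classes \<rho> n \<and> (cle \<rho> \<alpha> \<beta> \<or> cle \<rho> \<beta> \<alpha>))"

definition component :: "(nat \<Rightarrow> nat \<Rightarrow> bool) \<Rightarrow> nat \<Rightarrow> nat set \<Rightarrow> nat set set" where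
  "component \<rho> n \<alpha> = {\<beta>. (comparable \<rho> n)\<^sup>*\<^sup>* \<alpha> \<beta>}"

text \<open>The flag subspaces V_alpha, spanned by the adapted basis vectors v_i with hat i <= alpha.\<close>
definition Vflag :: "(nat \<Rightarrow> nat \<Rightarrow> bool) \<Rightarrow> nat \<Rightarrow> ('k::field \<Rightarrow> 'v::ab_group_add \<Rightarrow> 'v)
    \<Rightarrow> (nat \<Rightarrow> 'v) \<Rightarrow> nat set \<Rightarrow> 'v set" where
  "Vflag \<rho> n scale v \<alpha> = Modules.module.span scale (v ` {i. i < n \<and> cle \<rho> (cls \<rho> n i) \<alpha>})"

text \<open>END(F): linear endomorphisms of V preserving every V_alpha.\<close>
definition ENDF :: "(nat \<Rightarrow> nat \<Rightarrow> bool) \<Rightarrow> nat \<Rightarrow> ('k::field \<Rightarrow> 'v::ab_group_add \<Rightarrow> 'v)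
    \<Rightarrow> (nat \<Rightarrow> 'v) \<Rightarrow> ('v \<Rightarrow> 'v) set" where
  "ENDF \<rho> n scale v = {f. Vector_Spaces.linear scale scale f
      \<and> (\<forall>\<alpha>\<in>classes \<rho> n. f ` Vflag \<rho> n scale v \<alpha> \<subseteq> Vflag \<rho> n scale v \<alpha>)}"

text \<open>Homogeneous component V_x of V for the grading deg v_i = h i.\<close>
definition Vdeg :: "nat \<Rightarrow> ('k::field \<Rightarrow> 'v::ab_group_add \<Rightarrow> 'v) \<Rightarrow> (nat \<Rightarrow> 'v)
    \<Rightarrow> (nat \<Rightarrow> 'g) \<Rightarrow> 'g \<Rightarrow> 'v set" where
  "Vdeg n scale v h x = Modules.module.span scale (v ` {i. i < n \<and> h i = x})"

text \<open>END(F)_sigma = {f. f(V_x) \<subseteq> V_(sigma x) for all x}.\<close>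
definition ENDdeg :: "(nat \<Rightarrow> nat \<Rightarrow> bool) \<Rightarrow> nat \<Rightarrow> ('k::field \<Rightarrow> 'v::ab_group_add \<Rightarrow> 'v)
    \<Rightarrow> (nat \<Rightarrow> 'v) \<Rightarrow> (nat \<Rightarrow> 'g::group_add) \<Rightarrow> 'g \<Rightarrow> ('v \<Rightarrow> 'v) set" where
  "ENDdeg \<rho> n scale v h \<sigma> = {f \<in> ENDF \<rho> n scale v.
      \<forall>x. f ` Vdeg n scale v h x \<subseteq> Vdeg n scale v h (\<sigma> + x)}"

text \<open>END(F) and END(F') are isomorphic as G-graded (unital, associative) k-algebras.\<close>
definition graded_END_iso :: "(nat \<Rightarrow> nat \<Rightarrow> bool) \<Rightarrow> nat \<Rightarrow> ('k::field \<Rightarrow> 'v::ab_group_add \<Rightarrow> 'v)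
    \<Rightarrow> (nat \<Rightarrow> 'v) \<Rightarrow> (nat \<Rightarrow> 'g::group_add) \<Rightarrow> (nat \<Rightarrow> 'g) \<Rightarrow> bool" where
  "graded_END_iso \<rho> n scale v h h' =
    (\<exists>\<Phi>. bij_betw \<Phi> (ENDF \<rho> n scale v) (ENDF \<rho> n scale v)
      \<and> (\<forall>f\<in>ENDF \<rho> n scale v. \<forall>f'\<in>ENDF \<rho> n scale v.
            \<Phi> (\<lambda>x. f x + f' x) = (\<lambda>x. \<Phi> f x + \<Phi> f' x) \<and> \<Phi> (f \<circ> f') = \<Phi> f \<circ> \<Phi> f')
      \<and> (\<forall>c. \<forall>f\<in>ENDF \<rho> n scale v. \<Phi> (\<lambda>x. scale c (f x)) = (\<lambda>x. scale c (\<Phi> f x)))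
      \<and> \<Phi> id = id
      \<and> (\<forall>\<sigma>. \<Phi> ` ENDdeg \<rho> n scale v h \<sigma> = ENDdeg \<rho> n scale v h' \<sigma>))"

end

theory Submission
  imports Defs
begin


locale fsetup = vector_space scale for scale :: "'k::field \<Rightarrow> 'v::ab_group_add \<Rightarrow> 'v" (infixr \<open>*s\<close> 75) +
  fixes \<rho> :: "nat \<Rightarrow> nat \<Rightarrow> bool" and n :: nat and v :: "nat \<Rightarrow> 'v"
  assumes refl: "\<forall>i<n. \<rho> i i"
    and trans: "\<forall>i<n. \<forall>j<n. \<forall>k<n. \<rho> i j \<and> \<rho> j k \<longrightarrow> \<rho> i k"
    and inj: "inj_on v {0..<n}"
    and indep: "\<not> dependent (v ` {0..<n})"
    and spans: "span (v ` {0..<n}) = UNIV"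
begin

definition "BB = v ` {0..<n}"
definition co :: "nat \<Rightarrow> 'v \<Rightarrow> 'k" where "co a u = representation BB u (v a)"

lemma indepB: "independent BB" using indep by (simp add: BB_def)
lemma inspan: "x \<in> span BB" using spans by (simp add: BB_def)

lemma co_add: "co a (x + y) = co a x + co a y"
  unfolding co_def using representation_add[OF indepB inspan inspan] by simp
lemma co_scale: "co a (c *s x) = c * co a x"
  unfolding co_def using representation_scale[OF indepB inspan] by simp
lemma co_zero[simp]: "co a 0 = 0"
  unfolding co_def by (simp add: representation_zero)
lemma co_sum: "co a (\<Sum>i\<in>I. f i) = (\<Sum>i\<in>I. co a (f i))"
  by (induction I rule: infinite_finite_induct) (auto simp: co_add)
lemma co_neg: "co a (- x) = - co a x"
  unfolding co_def using representation_neg[OF indepB inspan] by simp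
lemma co_diff: "co a (x - y) = co a x - co a y"
  using co_add[of a x "-y"] co_neg[of a y] by simp

lemma co_v: "a < n \<Longrightarrow> b < n \<Longrightarrow> co a (v b) = (if a = b then 1 else 0)"
proof -
  assume ab: "a < n" "b < n"
  have "v b \<in> BB" using ab by (simp add: BB_def)
  then have "co a (v b) = (if v a = v b then 1 else 0)"
    unfolding co_def using representation_basis[OF indepB] by simp
  moreover have "v a = v b \<longleftrightarrow> a = b" using inj ab by (auto simp: inj_on_def)
  ultimately show ?thesis by simp
qed

lemma expand: "x = (\<Sum>b<n. co b x *s v b)"
proof -
  have "(\<Sum>w\<in>BB. representation BB x w *s w) = x"
    by (rule sum_representation_eq[OF indepB inspan]) (auto simp: BB_def)
  moreover have "(\<Sum>w\<in>BB. representation BB x w *s w) = (\<Sum>b<n. co b x *s v b)"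
    unfolding BB_def co_def using inj
    by (simp add: sum.reindex lessThan_atLeast0)
  ultimately show ?thesis by simp
qed

lemma vec_eq: "(\<And>a. a < n \<Longrightarrow> co a x = co a y) \<Longrightarrow> x = y"
  by (subst expand, subst (2) expand) simp

lemma vec_zero: "(\<And>a. a < n \<Longrightarrow> co a x = 0) \<Longrightarrow> x = 0"
  using vec_eq[of x 0] by simp

lemma v_nz: "a < n \<Longrightarrow> v a \<noteq> 0"
  using co_v[of a a] by auto

lemma co_span: assumes S: "S \<subseteq> {0..<n}"
  shows "x \<in> span (v ` S) \<longleftrightarrow> (\<forall>a<n. co a x \<noteq> 0 \<longrightarrow> a \<in> S)"
proof
  assume x: "x \<in> span (v ` S)"
  show "\<forall>a<n. co a x \<noteq> 0 \<longrightarrow> a \<in> S"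
  proof (intro allI impI)
    fix a assume a: "a < n" "co a x \<noteq> 0"
    have "representation BB x = representation (v ` S) x"
      by (rule representation_extend[OF indepB x]) (use S in \<open>auto simp: BB_def\<close>)
    then have "representation (v ` S) x (v a) \<noteq> 0" using a by (simp add: co_def)
    then have "v a \<in> v ` S" by (rule representation_ne_zero)
    then obtain b where b: "b \<in> S" "v a = v b" by auto
    then have "b < n" using S by auto
    then have "a = b" using inj a b by (auto simp: inj_on_def)
    then show "a \<in> S" using b by simp
  qed
next
  assume H: "\<forall>a<n. co a x \<noteq> 0 \<longrightarrow> a \<in> S"
  have "x = (\<Sum>b<n. co b x *s v b)" by (rule expand)
  also have "\<dots> \<in> span (v ` S)"
  proof (rule span_sum)
    fix b assume "b \<in> {..<n}"
    then show "co b x *s v b \<in> span (v ` S)"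
      using H by (cases "co b x = 0") (auto intro: span_scale span_base span_zero)
  qed
  finally show "x \<in> span (v ` S)" .
qed


lemma lin_iff: "Vector_Spaces.linear (*s) (*s) f \<longleftrightarrow> (\<forall>x y. f (x + y) = f x + f y) \<and> (\<forall>c x. f (c *s x) = c *s f x)"
  using Vector_Spaces.linear_iff[of "(*s)" "(*s)" f] vector_space_axioms by auto

abbreviation lin where "lin f \<equiv> Vector_Spaces.linear (*s) (*s) f"

lemma lin_add: "lin f \<Longrightarrow> f (x + y) = f x + f y" by (simp add: lin_iff)
lemma lin_scale: "lin f \<Longrightarrow> f (c *s x) = c *s f x" by (simp add: lin_iff)
lemma lin_zero: "lin f \<Longrightarrow> f 0 = 0"
  using lin_scale[of f 0 0] by simp
lemma lin_sum: "lin f \<Longrightarrow> f (\<Sum>i\<in>I. g i) = (\<Sum>i\<in>I. f (g i))"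
  by (induction I rule: infinite_finite_induct) (auto simp: lin_add lin_zero)

definition M :: "('v \<Rightarrow> 'v) \<Rightarrow> nat \<Rightarrow> nat \<Rightarrow> 'k" where "M f a b = co a (f (v b))"

lemma lin_apply: "lin f \<Longrightarrow> f x = (\<Sum>b<n. co b x *s f (v b))"
  by (subst expand) (simp add: lin_sum lin_scale)

lemma co_lin: "lin f \<Longrightarrow> co a (f x) = (\<Sum>b<n. co b x * M f a b)"
  by (subst lin_apply) (auto simp: co_sum co_scale M_def)

lemma lin_ext: "lin f \<Longrightarrow> lin g \<Longrightarrow> (\<And>b. b < n \<Longrightarrow> f (v b) = g (v b)) \<Longrightarrow> f = g"
proof (rule ext)
  fix x assume lf: "lin f" and lg: "lin g" and eq: "\<And>b. b < n \<Longrightarrow> f (v b) = g (v b)"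
  have "f x = (\<Sum>b<n. co b x *s f (v b))" by (rule lin_apply[OF lf])
  also have "\<dots> = (\<Sum>b<n. co b x *s g (v b))" using eq by simp
  also have "\<dots> = g x" by (rule lin_apply[OF lg, symmetric])
  finally show "f x = g x" .
qed

lemma M_eq: "lin f \<Longrightarrow> lin g \<Longrightarrow> (\<And>a b. a < n \<Longrightarrow> b < n \<Longrightarrow> M f a b = M g a b) \<Longrightarrow> f = g"
  by (rule lin_ext, assumption+, rule vec_eq) (simp add: M_def)

lemma lin_comp: "lin f \<Longrightarrow> lin g \<Longrightarrow> lin (f \<circ> g)"
  by (simp add: lin_iff)

lemma lin_id: "lin id" by (simp add: lin_iff)

lemma M_comp: "lin f \<Longrightarrow> lin g \<Longrightarrow> M (f \<circ> g) a b = (\<Sum>c<n. M g c b * M f a c)"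
  by (simp add: M_def co_lin)

lemma M_id: "a < n \<Longrightarrow> b < n \<Longrightarrow> M id a b = (if a = b then 1 else 0)"
  by (simp add: M_def co_v)

definition E :: "nat \<Rightarrow> nat \<Rightarrow> 'v \<Rightarrow> 'v" where "E a b = (\<lambda>u. co b u *s v a)"

lemma lin_E: "lin (E a b)"
  by (simp add: lin_iff E_def co_add co_scale scale_left_distrib)

lemma M_E: "c < n \<Longrightarrow> d < n \<Longrightarrow> a < n \<Longrightarrow> b < n \<Longrightarrow> M (E a b) c d = (if c = a \<and> d = b then 1 else 0)"
  by (simp add: M_def E_def co_scale co_v)

lemma cls_mem: "i < n \<Longrightarrow> i \<in> cls \<rho> n i"
  using refl by (simp add: cls_def)

lemma T: "a < n \<Longrightarrow> b < n \<Longrightarrow> c < n \<Longrightarrow> \<rho> a b \<Longrightarrow> \<rho> b c \<Longrightarrow> \<rho> a c"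
  using trans by blast

lemma cle_cls: assumes i: "i < n" and j: "j < n"
  shows "cle \<rho> (cls \<rho> n i) (cls \<rho> n j) \<longleftrightarrow> \<rho> i j"
proof
  assume "cle \<rho> (cls \<rho> n i) (cls \<rho> n j)"
  then obtain x y where x: "x < n" "\<rho> i x" and y: "y < n" "\<rho> y j" and xy: "\<rho> x y"
    unfolding cle_def cls_def by auto
  have "\<rho> i y" by (rule T[OF i x(1) y(1) x(2) xy])
  then show "\<rho> i j" by (rule T[OF i y(1) j _ y(2)])
next
  assume "\<rho> i j"
  then show "cle \<rho> (cls \<rho> n i) (cls \<rho> n j)"
    unfolding cle_def using cls_mem[OF i] cls_mem[OF j] by blast
qed

lemma classes_iff: "\<alpha> \<in> classes \<rho> n \<longleftrightarrow> (\<exists>i<n. \<alpha> = cls \<rho> n i)"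
  by (auto simp: classes_def)

lemma cls_eq: assumes i: "i < n" and j: "j < n"
  shows "cls \<rho> n i = cls \<rho> n j \<longleftrightarrow> \<rho> i j \<and> \<rho> j i"
proof
  assume "cls \<rho> n i = cls \<rho> n j"
  then have "j \<in> cls \<rho> n i" using cls_mem[OF j] by simp
  then show "\<rho> i j \<and> \<rho> j i" by (simp add: cls_def)
next
  assume ij: "\<rho> i j \<and> \<rho> j i"
  show "cls \<rho> n i = cls \<rho> n j"
  proof (rule set_eqI)
    fix x
    show "x \<in> cls \<rho> n i \<longleftrightarrow> x \<in> cls \<rho> n j"
    proof
      assume "x \<in> cls \<rho> n i"
      then have x: "x < n" "\<rho> i x" "\<rho> x i" by (auto simp: cls_def)
      have "\<rho> j x" using T[OF j i x(1)] ij x by simp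
      moreover have "\<rho> x j" using T[OF x(1) i j] ij x by simp
      ultimately show "x \<in> cls \<rho> n j" using x by (simp add: cls_def)
    next
      assume "x \<in> cls \<rho> n j"
      then have x: "x < n" "\<rho> j x" "\<rho> x j" by (auto simp: cls_def)
      have "\<rho> i x" using T[OF i j x(1)] ij x by simp
      moreover have "\<rho> x i" using T[OF x(1) j i] ij x by simp
      ultimately show "x \<in> cls \<rho> n i" using x by (simp add: cls_def)
    qed
  qed
qed

lemma cls_sub: "cls \<rho> n i \<subseteq> {0..<n}" by (auto simp: cls_def)

lemma Vflag_iff: assumes i: "i < n"
  shows "Vflag \<rho> n (*s) v (cls \<rho> n i) = {x. \<forall>a<n. co a x \<noteq> 0 \<longrightarrow> \<rho> a i}"
proof -
  have "Vflag \<rho> n (*s) v (cls \<rho> n i) = span (v ` {a. a < n \<and> cle \<rho> (cls \<rho> n a) (cls \<rho> n i)})"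
    by (simp add: Vflag_def)
  also have "\<dots> = {x. \<forall>a<n. co a x \<noteq> 0 \<longrightarrow> \<rho> a i}"
  proof -
    have sub: "{a. a < n \<and> cle \<rho> (cls \<rho> n a) (cls \<rho> n i)} \<subseteq> {0..<n}" by auto
    have "x \<in> span (v ` {a. a < n \<and> cle \<rho> (cls \<rho> n a) (cls \<rho> n i)}) \<longleftrightarrow> (\<forall>a<n. co a x \<noteq> 0 \<longrightarrow> \<rho> a i)" for x
      unfolding co_span[OF sub] using cle_cls i by auto
    then show ?thesis by auto
  qed
  finally show ?thesis .
qed

lemma Vdeg_iff: "Vdeg n (*s) v h x = {u. \<forall>a<n. co a u \<noteq> 0 \<longrightarrow> h a = x}"
proof -
  have sub: "{i. i < n \<and> h i = x} \<subseteq> {0..<n}" by auto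
  have "u \<in> span (v ` {i. i < n \<and> h i = x}) \<longleftrightarrow> (\<forall>a<n. co a u \<noteq> 0 \<longrightarrow> h a = x)" for u
    using co_span[OF sub] by auto
  then show ?thesis unfolding Vdeg_def by auto
qed

lemma ENDF_iff: "f \<in> ENDF \<rho> n (*s) v \<longleftrightarrow> lin f \<and> (\<forall>a<n. \<forall>b<n. M f a b \<noteq> 0 \<longrightarrow> \<rho> a b)"
proof
  assume f: "f \<in> ENDF \<rho> n (*s) v"
  then have l: "lin f" by (simp add: ENDF_def)
  show "lin f \<and> (\<forall>a<n. \<forall>b<n. M f a b \<noteq> 0 \<longrightarrow> \<rho> a b)"
  proof (intro conjI l allI impI)
    fix a b assume ab: "a < n" "b < n" "M f a b \<noteq> 0"
    have "cls \<rho> n b \<in> classes \<rho> n" using ab by (auto simp: classes_iff)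
    then have "f ` Vflag \<rho> n (*s) v (cls \<rho> n b) \<subseteq> Vflag \<rho> n (*s) v (cls \<rho> n b)"
      using f by (simp add: ENDF_def)
    moreover have "v b \<in> Vflag \<rho> n (*s) v (cls \<rho> n b)"
      using ab refl by (auto simp: Vflag_iff co_v)
    ultimately have "f (v b) \<in> Vflag \<rho> n (*s) v (cls \<rho> n b)" by auto
    then show "\<rho> a b" using ab by (auto simp: Vflag_iff M_def)
  qed
next
  assume H: "lin f \<and> (\<forall>a<n. \<forall>b<n. M f a b \<noteq> 0 \<longrightarrow> \<rho> a b)"
  show "f \<in> ENDF \<rho> n (*s) v"
    unfolding ENDF_def
  proof (intro CollectI conjI ballI)
    show "lin f" using H by simp
    fix \<alpha> assume "\<alpha> \<in> classes \<rho> n"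
    then obtain i where i: "i < n" "\<alpha> = cls \<rho> n i" by (auto simp: classes_iff)
    show "f ` Vflag \<rho> n (*s) v \<alpha> \<subseteq> Vflag \<rho> n (*s) v \<alpha>"
    proof
      fix y assume "y \<in> f ` Vflag \<rho> n (*s) v \<alpha>"
      then obtain x where x: "x \<in> Vflag \<rho> n (*s) v \<alpha>" "y = f x" by auto
      have "\<forall>a<n. co a (f x) \<noteq> 0 \<longrightarrow> \<rho> a i"
      proof (intro allI impI)
        fix a assume a: "a < n" "co a (f x) \<noteq> 0"
        then have "(\<Sum>b<n. co b x * M f a b) \<noteq> 0" using H co_lin[of f a x] by simp
        then obtain b where b: "b < n" "co b x * M f a b \<noteq> 0"
          using sum.not_neutral_contains_not_neutral by blast
        then have "\<rho> a b" "\<rho> b i" using H a x i by (auto simp: Vflag_iff)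
        then show "\<rho> a i" using T a(1) b(1) i by blast
      qed
      then show "y \<in> Vflag \<rho> n (*s) v \<alpha>" using x i by (simp add: Vflag_iff)
    qed
  qed
qed

lemma ENDdeg_iff: "f \<in> ENDdeg \<rho> n (*s) v h \<sigma> \<longleftrightarrow> f \<in> ENDF \<rho> n (*s) v \<and> (\<forall>a<n. \<forall>b<n. M f a b \<noteq> 0 \<longrightarrow> h a = \<sigma> + h b)"
proof
  assume f: "f \<in> ENDdeg \<rho> n (*s) v h \<sigma>"
  then have F: "f \<in> ENDF \<rho> n (*s) v" by (simp add: ENDdeg_def)
  show "f \<in> ENDF \<rho> n (*s) v \<and> (\<forall>a<n. \<forall>b<n. M f a b \<noteq> 0 \<longrightarrow> h a = \<sigma> + h b)"
  proof (intro conjI F allI impI)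
    fix a b assume ab: "a < n" "b < n" "M f a b \<noteq> 0"
    have "v b \<in> Vdeg n (*s) v h (h b)" using ab by (auto simp: Vdeg_iff co_v)
    then have "f (v b) \<in> Vdeg n (*s) v h (\<sigma> + h b)" using f by (auto simp: ENDdeg_def)
    then show "h a = \<sigma> + h b" using ab by (auto simp: Vdeg_iff M_def)
  qed
next
  assume H: "f \<in> ENDF \<rho> n (*s) v \<and> (\<forall>a<n. \<forall>b<n. M f a b \<noteq> 0 \<longrightarrow> h a = \<sigma> + h b)"
  then have l: "lin f" by (simp add: ENDF_def)
  show "f \<in> ENDdeg \<rho> n (*s) v h \<sigma>"
    unfolding ENDdeg_def
  proof (intro CollectI conjI allI)
    show "f \<in> ENDF \<rho> n (*s) v" using H by simp
    fix y
    show "f ` Vdeg n (*s) v h y \<subseteq> Vdeg n (*s) v h (\<sigma> + y)"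
    proof
      fix z assume "z \<in> f ` Vdeg n (*s) v h y"
      then obtain x where x: "x \<in> Vdeg n (*s) v h y" "z = f x" by auto
      have "\<forall>a<n. co a (f x) \<noteq> 0 \<longrightarrow> h a = \<sigma> + y"
      proof (intro allI impI)
        fix a assume a: "a < n" "co a (f x) \<noteq> 0"
        then have "(\<Sum>b<n. co b x * M f a b) \<noteq> 0" using l co_lin[of f a x] by simp
        then obtain b where b: "b < n" "co b x * M f a b \<noteq> 0"
          using sum.not_neutral_contains_not_neutral by blast
        then show "h a = \<sigma> + y" using H a x by (auto simp: Vdeg_iff)
      qed
      then show "z \<in> Vdeg n (*s) v h (\<sigma> + y)" using x by (simp add: Vdeg_iff)
    qed
  qed
qed


abbreviation AA where "AA \<equiv> ENDF \<rho> n (*s) v"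

lemma A_lin: "f \<in> AA \<Longrightarrow> lin f" by (simp add: ENDF_def)

lemma M_add: "M (\<lambda>x. f x + g x) a b = M f a b + M g a b" by (simp add: M_def co_add)
lemma M_smul: "M (\<lambda>x. c *s f x) a b = c * M f a b" by (simp add: M_def co_scale)
lemma M_zero: "M (\<lambda>x. 0) a b = 0" by (simp add: M_def)
lemma M_sum: "M (\<lambda>x. \<Sum>i\<in>I. F i x) a b = (\<Sum>i\<in>I. M (F i) a b)" by (simp add: M_def co_sum)

lemma lin_addf: "lin f \<Longrightarrow> lin g \<Longrightarrow> lin (\<lambda>x. f x + g x)"
  by (simp add: lin_iff scale_right_distrib algebra_simps)
lemma lin_smul: "lin f \<Longrightarrow> lin (\<lambda>x. c *s f x)"
  by (simp add: lin_iff scale_right_distrib scale_left_commute)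
lemma lin_zerof: "lin (\<lambda>x. 0)" by (simp add: lin_iff)
lemma lin_sumf: "(\<And>i. i \<in> I \<Longrightarrow> lin (F i)) \<Longrightarrow> lin (\<lambda>x. \<Sum>i\<in>I. F i x)"
  by (induction I rule: infinite_finite_induct) (auto simp: lin_zerof intro!: lin_addf)

lemma A_add: assumes f: "f \<in> AA" and g: "g \<in> AA" shows "(\<lambda>x. f x + g x) \<in> AA"
  unfolding ENDF_iff
proof (intro conjI allI impI)
  show "lin (\<lambda>x. f x + g x)" using f g by (simp add: A_lin lin_addf)
  fix a b assume ab: "a < n" "b < n" "M (\<lambda>x. f x + g x) a b \<noteq> 0"
  then show "\<rho> a b" using f g by (cases "M f a b = 0") (auto simp: M_add ENDF_iff)
qed
lemma A_smul: "f \<in> AA \<Longrightarrow> (\<lambda>x. c *s f x) \<in> AA"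
  by (auto simp: ENDF_iff M_smul intro!: lin_smul)
lemma A_zero: "(\<lambda>x. 0) \<in> AA"
  by (auto simp: ENDF_iff M_zero lin_zerof)
lemma A_sum: "(\<And>i. i \<in> I \<Longrightarrow> F i \<in> AA) \<Longrightarrow> (\<lambda>x. \<Sum>i\<in>I. F i x) \<in> AA"
  by (induction I rule: infinite_finite_induct) (auto simp: A_zero intro!: A_add)
lemma A_id: "id \<in> AA"
  using refl by (auto simp: ENDF_iff M_id lin_id split: if_splits)
lemma A_comp: assumes f: "f \<in> AA" and g: "g \<in> AA" shows "f \<circ> g \<in> AA"
proof -
  have l: "lin f" "lin g" using f g by (auto simp: A_lin)
  show ?thesis unfolding ENDF_iff
  proof (intro conjI allI impI lin_comp l)
    fix a b assume ab: "a < n" "b < n" "M (f \<circ> g) a b \<noteq> 0"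
    then have "(\<Sum>c<n. M g c b * M f a c) \<noteq> 0" using M_comp[OF l] by simp
    then obtain c where c: "c < n" "M g c b * M f a c \<noteq> 0"
      using sum.not_neutral_contains_not_neutral by blast
    then have "\<rho> a c" "\<rho> c b" using f g ab by (auto simp: ENDF_iff)
    then show "\<rho> a b" using T ab(1) ab(2) c(1) by blast
  qed
qed
lemma E_A: "a < n \<Longrightarrow> b < n \<Longrightarrow> \<rho> a b \<Longrightarrow> E a b \<in> AA"
  by (auto simp: ENDF_iff M_E lin_E split: if_splits)

lemma deg_comp: assumes f: "f \<in> ENDdeg \<rho> n (*s) v h \<sigma>" and g: "g \<in> ENDdeg \<rho> n (*s) v h \<tau>"
  shows "f \<circ> g \<in> ENDdeg \<rho> n (*s) v h (\<sigma> + \<tau>)"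
proof -
  have fA: "f \<in> AA" and gA: "g \<in> AA" using f g by (auto simp: ENDdeg_iff)
  have l: "lin f" "lin g" using fA gA by (auto simp: A_lin)
  show ?thesis unfolding ENDdeg_iff
  proof (intro conjI allI impI A_comp fA gA)
    fix a b assume ab: "a < n" "b < n" "M (f \<circ> g) a b \<noteq> 0"
    then have "(\<Sum>c<n. M g c b * M f a c) \<noteq> 0" using M_comp[OF l] by simp
    then obtain c where c: "c < n" "M g c b * M f a c \<noteq> 0"
      using sum.not_neutral_contains_not_neutral by blast
    then have "h a = \<sigma> + h c" "h c = \<tau> + h b" using f g ab by (auto simp: ENDdeg_iff)
    then show "h a = \<sigma> + \<tau> + h b" by (simp add: add.assoc)
  qed
qed

lemma E_deg: "a < n \<Longrightarrow> b < n \<Longrightarrow> \<rho> a b \<Longrightarrow> E a b \<in> ENDdeg \<rho> n (*s) v h (h a - h b)"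
  by (auto simp: ENDdeg_iff E_A M_E split: if_splits)

lemma corner: "lin f \<Longrightarrow> a < n \<Longrightarrow> b < n \<Longrightarrow> E a a \<circ> f \<circ> E b b = (\<lambda>x. M f a b *s E a b x)"
  by (rule ext) (simp add: E_def lin_scale co_scale M_def mult.commute)

lemma E_nz: "a < n \<Longrightarrow> b < n \<Longrightarrow> E a b \<noteq> (\<lambda>x. 0)"
proof
  assume "a < n" "b < n" "E a b = (\<lambda>x. 0)"
  then have "E a b (v b) = 0" by simp
  then show False using \<open>a < n\<close> \<open>b < n\<close> v_nz[of a] by (simp add: E_def co_v)
qed

lemma sumE: "(\<lambda>x. \<Sum>a<n. E a a x) = id"
  by (rule ext) (simp add: E_def expand[symmetric])

lemma E_idem: "a < n \<Longrightarrow> E a a \<circ> E a a = E a a"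
  by (rule ext) (simp add: E_def co_scale co_v)
lemma E_orth: "a < n \<Longrightarrow> b < n \<Longrightarrow> a \<noteq> b \<Longrightarrow> E a a \<circ> E b b = (\<lambda>x. 0)"
  by (rule ext) (simp add: E_def co_scale co_v)

definition isauto :: "(('v \<Rightarrow> 'v) \<Rightarrow> ('v \<Rightarrow> 'v)) \<Rightarrow> bool" where
  "isauto \<Phi> \<longleftrightarrow> bij_betw \<Phi> AA AA
      \<and> (\<forall>f\<in>AA. \<forall>f'\<in>AA. \<Phi> (\<lambda>x. f x + f' x) = (\<lambda>x. \<Phi> f x + \<Phi> f' x) \<and> \<Phi> (f \<circ> f') = \<Phi> f \<circ> \<Phi> f')
      \<and> (\<forall>c. \<forall>f\<in>AA. \<Phi> (\<lambda>x. c *s (f x)) = (\<lambda>x. c *s (\<Phi> f x)))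
      \<and> \<Phi> id = id"

lemma iso_iff: "graded_END_iso \<rho> n (*s) v h h' \<longleftrightarrow>
   (\<exists>\<Phi>. isauto \<Phi> \<and> (\<forall>\<sigma>. \<Phi> ` ENDdeg \<rho> n (*s) v h \<sigma> = ENDdeg \<rho> n (*s) v h' \<sigma>))"
  unfolding graded_END_iso_def isauto_def by (simp only: conj_assoc)

lemma inv_auto: assumes au: "isauto \<Phi>" shows "isauto (inv_into AA \<Phi>)"
proof -
  let ?P = "inv_into AA \<Phi>"
  have bij: "bij_betw \<Phi> AA AA" using au by (simp add: isauto_def)
  have bij': "bij_betw ?P AA AA" by (rule bij_betw_inv_into[OF bij])
  have PA: "f \<in> AA \<Longrightarrow> ?P f \<in> AA" for f using bij' by (auto simp: bij_betw_def)
  have PF: "f \<in> AA \<Longrightarrow> \<Phi> (?P f) = f" for f using bij by (simp add: bij_betw_def f_inv_into_f)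
  have FP: "f \<in> AA \<Longrightarrow> ?P (\<Phi> f) = f" for f using bij by (simp add: bij_betw_def inv_into_f_f)
  show ?thesis unfolding isauto_def
  proof (intro conjI ballI allI bij')
    fix f g assume f: "f \<in> AA" and g: "g \<in> AA"
    have "\<Phi> (\<lambda>x. ?P f x + ?P g x) = (\<lambda>x. f x + g x)"
      using au PA f g PF by (simp add: isauto_def)
    then show "?P (\<lambda>x. f x + g x) = (\<lambda>x. ?P f x + ?P g x)"
      using FP[OF A_add[OF PA[OF f] PA[OF g]]] by simp
    have "\<Phi> (?P f \<circ> ?P g) = f \<circ> g"
      using au PA f g PF by (simp add: isauto_def)
    then show "?P (f \<circ> g) = ?P f \<circ> ?P g"
      using FP[OF A_comp[OF PA[OF f] PA[OF g]]] by simp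
  next
    fix c f assume f: "f \<in> AA"
    have "\<Phi> (\<lambda>x. c *s ?P f x) = (\<lambda>x. c *s f x)"
      using au PA f PF by (simp add: isauto_def)
    then show "?P (\<lambda>x. c *s f x) = (\<lambda>x. c *s ?P f x)"
      using FP[OF A_smul[OF PA[OF f], of c]] by simp
  next
    have "\<Phi> id = id" using au by (simp add: isauto_def)
    then show "?P id = id" using FP[OF A_id] by simp
  qed
qed

lemma inv_grading: assumes au: "isauto \<Phi>" and gr: "\<And>\<sigma>. \<Phi> ` ENDdeg \<rho> n (*s) v h \<sigma> = ENDdeg \<rho> n (*s) v h' \<sigma>"
  shows "inv_into AA \<Phi> ` ENDdeg \<rho> n (*s) v h' \<sigma> = ENDdeg \<rho> n (*s) v h \<sigma>"
proof -
  have bij: "bij_betw \<Phi> AA AA" using au by (simp add: isauto_def)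
  have sub: "ENDdeg \<rho> n (*s) v h \<sigma> \<subseteq> AA" by (auto simp: ENDdeg_iff)
  show ?thesis unfolding gr[symmetric]
    using inv_into_image_cancel[OF _ sub] bij by (auto simp: bij_betw_def)
qed


end

context fsetup begin
lemma idem_lemma:
  assumes lp: "lin p" and lq: "lin q"
    and pn: "p \<noteq> (\<lambda>x. 0)" and qn: "q \<noteq> (\<lambda>x. 0)"
    and d: "p \<circ> q \<circ> p = (\<lambda>x. d *s p x)" and c: "q \<circ> p \<circ> q = (\<lambda>x. c *s q x)"
  shows "c = 0 \<longleftrightarrow> d = 0"
proof -
  have d': "p (q (p x)) = d *s p x" for x using fun_cong[OF d, of x] by simp
  have c': "q (p (q x)) = c *s q x" for x using fun_cong[OF c, of x] by simp
  have eq: "d *s p (q x) = c *s p (q x)" for x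
  proof -
    have "p (q (p (q x))) = p (c *s q x)" using c'[of x] by simp
    also have "\<dots> = c *s p (q x)" by (rule lin_scale[OF lp])
    finally show ?thesis using d'[of "q x"] by simp
  qed
  obtain x0 where x0: "p x0 \<noteq> 0" using pn by auto
  obtain y0 where y0: "q y0 \<noteq> 0" using qn by auto
  show ?thesis
  proof (cases "\<exists>x. p (q x) \<noteq> 0")
    case True
    then obtain x where "p (q x) \<noteq> 0" by auto
    then have "c = d" using eq[of x] by simp
    then show ?thesis by simp
  next
    case False
    then have "d *s p x0 = 0" using d'[of x0] by simp
    then have "d = 0" using x0 by simp
    moreover have "c *s q y0 = 0" using c'[of y0] False lin_zero[OF lq] by simp
    then have "c = 0" using y0 by simp
    ultimately show ?thesis by simp
  qed
qed

context
  fixes \<Phi> assumes au: "isauto \<Phi>"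
begin

lemma P_bij: "bij_betw \<Phi> AA AA" using au by (simp add: isauto_def)
lemma P_A: "f \<in> AA \<Longrightarrow> \<Phi> f \<in> AA" using P_bij by (auto simp: bij_betw_def)
lemma P_add: "f \<in> AA \<Longrightarrow> g \<in> AA \<Longrightarrow> \<Phi> (\<lambda>x. f x + g x) = (\<lambda>x. \<Phi> f x + \<Phi> g x)"
  using au by (simp add: isauto_def)
lemma P_mult: "f \<in> AA \<Longrightarrow> g \<in> AA \<Longrightarrow> \<Phi> (f \<circ> g) = \<Phi> f \<circ> \<Phi> g"
  using au by (simp add: isauto_def)
lemma P_smul: "f \<in> AA \<Longrightarrow> \<Phi> (\<lambda>x. c *s f x) = (\<lambda>x. c *s \<Phi> f x)"
  using au by (simp add: isauto_def)
lemma P_id: "\<Phi> id = id" using au by (simp add: isauto_def)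
lemma P_zero: "\<Phi> (\<lambda>x. 0) = (\<lambda>x. 0)"
  using P_smul[OF A_zero, of 0] by simp
lemma P_inj: "f \<in> AA \<Longrightarrow> g \<in> AA \<Longrightarrow> \<Phi> f = \<Phi> g \<Longrightarrow> f = g"
  using P_bij by (auto simp: bij_betw_def inj_on_def)
lemma P_nz: "f \<in> AA \<Longrightarrow> f \<noteq> (\<lambda>x. 0) \<Longrightarrow> \<Phi> f \<noteq> (\<lambda>x. 0)"
proof
  assume f: "f \<in> AA" and nz: "f \<noteq> (\<lambda>x. 0)" and z: "\<Phi> f = (\<lambda>x. 0)"
  have "\<Phi> f = \<Phi> (\<lambda>x. 0)" using z P_zero by simp
  then have "f = (\<lambda>x. 0)" by (rule P_inj[OF f A_zero])
  then show False using nz by simp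
qed
lemma P_surj: assumes y: "y \<in> AA" shows "\<exists>x\<in>AA. \<Phi> x = y"
proof -
  have "y \<in> \<Phi> ` AA" using P_bij y by (simp add: bij_betw_def)
  then show ?thesis by blast
qed
lemma P_sum: "finite I \<Longrightarrow> (\<And>i. i \<in> I \<Longrightarrow> F i \<in> AA) \<Longrightarrow>
    \<Phi> (\<lambda>x. \<Sum>i\<in>I. F i x) = (\<lambda>x. \<Sum>i\<in>I. \<Phi> (F i) x)"
proof (induction I rule: finite_induct)
  case empty then show ?case using P_zero by simp
next
  case (insert i I)
  have "\<Phi> (\<lambda>x. \<Sum>j\<in>insert i I. F j x) = \<Phi> (\<lambda>x. F i x + (\<Sum>j\<in>I. F j x))"
    using insert by simp
  also have "\<dots> = (\<lambda>x. \<Phi> (F i) x + \<Phi> (\<lambda>x. \<Sum>j\<in>I. F j x) x)"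
    using P_add[of "F i" "\<lambda>x. \<Sum>j\<in>I. F j x"] insert A_sum by (simp add: A_sum)
  also have "\<dots> = (\<lambda>x. \<Sum>j\<in>insert i I. \<Phi> (F j) x)" using insert by simp
  finally show ?case .
qed

definition e where "e i = \<Phi> (E i i)"

lemma e_A: "i < n \<Longrightarrow> e i \<in> AA" using refl by (simp add: e_def P_A E_A)
lemma e_lin: "i < n \<Longrightarrow> lin (e i)" using e_A A_lin by blast
lemma e_nz: "i < n \<Longrightarrow> e i \<noteq> (\<lambda>x. 0)"
  using P_nz[OF E_A E_nz] refl by (simp add: e_def)
lemma e_idem: "i < n \<Longrightarrow> e i (e i x) = e i x"
proof -
  assume i: "i < n"
  have EA: "E i i \<in> AA" using refl i E_A by blast
  have "e i \<circ> e i = e i" using P_mult[OF EA EA] E_idem[OF i] by (simp add: e_def)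
  then have "(e i \<circ> e i) x = e i x" by (rule fun_cong)
  then show ?thesis by simp
qed
lemma e_orth: "i < n \<Longrightarrow> j < n \<Longrightarrow> i \<noteq> j \<Longrightarrow> e i (e j x) = 0"
proof -
  assume ij: "i < n" "j < n" "i \<noteq> j"
  have EA: "E i i \<in> AA" "E j j \<in> AA" using refl ij E_A by blast+
  have "e i \<circ> e j = (\<lambda>x. 0)" using P_mult[OF EA] E_orth[OF ij] P_zero by (simp add: e_def)
  then have "(e i \<circ> e j) x = (\<lambda>x. 0) x" by (rule fun_cong)
  then show ?thesis by simp
qed
lemma e_sum: "(\<Sum>i<n. e i x) = x"
proof -
  have "\<Phi> (\<lambda>x. \<Sum>a<n. E a a x) = (\<lambda>x. \<Sum>a<n. e a x)"
    unfolding e_def using refl by (intro P_sum) (auto intro: E_A)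
  then have "(\<lambda>x. \<Sum>a<n. e a x) = id" using P_id sumE by simp
  then show ?thesis using fun_cong[of "\<lambda>x. \<Sum>a<n. e a x" id x] by simp
qed

lemma e_corner: assumes i: "i < n" and y: "y \<in> AA" shows "\<exists>c. e i \<circ> y \<circ> e i = (\<lambda>x. c *s e i x)"
proof -
  obtain z where z: "z \<in> AA" "\<Phi> z = y" using P_surj[OF y] by auto
  have EA: "E i i \<in> AA" using refl i by (simp add: E_A)
  have "e i \<circ> y \<circ> e i = \<Phi> (E i i \<circ> z \<circ> E i i)"
    unfolding e_def using z EA by (simp add: P_mult A_comp)
  also have "E i i \<circ> z \<circ> E i i = (\<lambda>x. M z i i *s E i i x)"
    using corner[OF A_lin[OF z(1)] i i] .
  also have "\<Phi> (\<lambda>x. M z i i *s E i i x) = (\<lambda>x. M z i i *s e i x)"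
    using P_smul[OF EA] by (simp add: e_def)
  finally have "e i \<circ> y \<circ> e i = (\<lambda>x. M z i i *s e i x)" .
  then show ?thesis by blast
qed

definition R where "R a i \<longleftrightarrow> M (e i) a a \<noteq> 0"

lemma R_iff: assumes i: "i < n" and a: "a < n"
  shows "(\<exists>c. c \<noteq> 0 \<and> e i \<circ> E a a \<circ> e i = (\<lambda>x. c *s e i x)) \<longleftrightarrow> R a i"
proof -
  obtain c where c: "e i \<circ> E a a \<circ> e i = (\<lambda>x. c *s e i x)"
    using e_corner[OF i E_A[OF a a]] refl a by auto
  have d: "E a a \<circ> e i \<circ> E a a = (\<lambda>x. M (e i) a a *s E a a x)"
    using corner[OF e_lin[OF i] a a] .
  have "c = 0 \<longleftrightarrow> M (e i) a a = 0"
    by (rule idem_lemma[OF lin_E e_lin[OF i] E_nz[OF a a] e_nz[OF i] d c])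
  moreover have "(\<exists>c'. c' \<noteq> 0 \<and> e i \<circ> E a a \<circ> e i = (\<lambda>x. c' *s e i x)) \<longleftrightarrow> c \<noteq> 0"
  proof
    assume "\<exists>c'. c' \<noteq> 0 \<and> e i \<circ> E a a \<circ> e i = (\<lambda>x. c' *s e i x)"
    then obtain c' where c': "c' \<noteq> 0" "e i \<circ> E a a \<circ> e i = (\<lambda>x. c' *s e i x)" by auto
    obtain x where x: "e i x \<noteq> 0" using e_nz[OF i] by auto
    have "c' *s e i x = c *s e i x" using fun_cong[OF c, of x] fun_cong[OF c'(2), of x] by auto
    then show "c \<noteq> 0" using x c' by simp
  qed (use c in auto)
  ultimately show ?thesis unfolding R_def by auto
qed

lemma R_exists_a: assumes i: "i < n" shows "\<exists>a<n. R a i"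
proof (rule ccontr)
  assume "\<not> (\<exists>a<n. R a i)"
  then have Z: "a < n \<Longrightarrow> e i (E a a (e i x)) = 0" for a x
  proof -
    assume a: "a < n" and nR: "\<not> (\<exists>a<n. R a i)"
    obtain c where c: "e i \<circ> E a a \<circ> e i = (\<lambda>x. c *s e i x)"
      using e_corner[OF i E_A[OF a a]] refl a by auto
    have "c = 0" using nR R_iff[OF i a] c a by blast
    then show ?thesis using fun_cong[OF c, of x] by simp
  qed
  have "e i x = 0" for x
  proof -
    have "e i x = e i (e i x)" using e_idem[OF i] by simp
    also have "\<dots> = e i (\<Sum>a<n. E a a (e i x))" using fun_cong[OF sumE, of "e i x"] by simp
    also have "\<dots> = (\<Sum>a<n. e i (E a a (e i x)))" by (simp add: lin_sum[OF e_lin[OF i]])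
    also have "\<dots> = 0" using Z by simp
    finally show ?thesis .
  qed
  then show False using e_nz[OF i] by auto
qed

lemma R_exists_i: assumes a: "a < n" shows "\<exists>i<n. R a i"
proof (rule ccontr)
  assume "\<not> (\<exists>i<n. R a i)"
  then have "(\<Sum>i<n. M (e i) a a) = 0" by (simp add: R_def)
  moreover have "M (\<lambda>x. \<Sum>i<n. e i x) a a = (\<Sum>i<n. M (e i) a a)" by (rule M_sum)
  moreover have "(\<lambda>x. \<Sum>i<n. e i x) = id" using e_sum by auto
  ultimately show False using M_id[OF a a] by simp
qed


lemma R_corner: assumes i: "i < n" and a: "a < n" and r: "R a i"
  obtains c where "c \<noteq> 0" "\<And>x. e i (E a a (e i x)) = c *s e i x"
proof -
  obtain c where c: "c \<noteq> 0" "e i \<circ> E a a \<circ> e i = (\<lambda>x. c *s e i x)" using R_iff[OF i a] r by blast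
  have "\<And>x. e i (E a a (e i x)) = c *s e i x" using fun_cong[OF c(2)] by simp
  then show thesis using that c(1) by blast
qed

lemma fact_AC: assumes ij: "i < n" "j < n" "\<rho> i j" and ab: "a < n" "b < n"
  and ra: "R a i" and rb: "R b j"
  shows "M (\<Phi> (E i j)) a b \<noteq> 0"
proof
  assume M0: "M (\<Phi> (E i j)) a b = 0"
  let ?f = "\<Phi> (E i j)"
  have EA: "E i j \<in> AA" using E_A ij by blast
  have EiA: "E i i \<in> AA" and EjA: "E j j \<in> AA" using E_A refl ij by auto
  have "E i i \<circ> E i j \<circ> E j j = E i j"
    using corner[OF lin_E ij(1) ij(2)] M_E[OF ij(1) ij(2) ij(1) ij(2)] by simp
  moreover have "\<Phi> (E i i \<circ> E i j \<circ> E j j) = e i \<circ> ?f \<circ> e j"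
    by (simp add: e_def P_mult A_comp EA EiA EjA)
  ultimately have X: "e i \<circ> ?f \<circ> e j = ?f" by simp
  have fe: "e i (?f (e j x)) = ?f x" for x using fun_cong[OF X, of x] by simp
  have fl: "lin ?f" using P_A[OF EA] A_lin by blast
  have z: "E a a (?f (E b b x)) = 0" for x
    using fun_cong[OF corner[OF fl ab], of x] M0 by simp
  obtain c where c: "c \<noteq> 0" "\<And>x. e i (E a a (e i x)) = c *s e i x" using R_corner[OF ij(1) ab(1) ra] by blast
  obtain d where d: "d \<noteq> 0" "\<And>x. e j (E b b (e j x)) = d *s e j x" using R_corner[OF ij(2) ab(2) rb] by blast
  have "?f x = 0" for x
  proof -
    have "(c * d) *s ?f x = c *s e i (?f (d *s e j x))"
      using fe lin_scale[OF fl] lin_scale[OF e_lin[OF ij(1)]] by (simp add: scale_scale)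
    also have "\<dots> = e i (E a a (e i (?f (e j (E b b (e j x))))))"
      using c d by simp
    also have "\<dots> = e i (E a a (?f (E b b (e j x))))" using fe by simp
    also have "\<dots> = 0" using z lin_zero[OF e_lin[OF ij(1)]] by simp
    finally show ?thesis using c d by simp
  qed
  then have "?f = (\<lambda>x. 0)" by auto
  then show False using P_nz[OF EA E_nz[OF ij(1) ij(2)]] by simp
qed

lemma e_range: assumes i: "i < n" and c: "c < n" and r: "R c i"
  shows "e i x \<in> span {e i (v c)}"
proof -
  obtain t where t: "t \<noteq> 0" "\<And>x. e i (E c c (e i x)) = t *s e i x" using R_corner[OF i c r] by blast
  have "t *s e i x = co c (e i x) *s e i (v c)"
    using t(2)[of x] lin_scale[OF e_lin[OF i]] by (simp add: E_def)
  moreover have "e i x = inverse t *s (t *s e i x)" using t(1) by simp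
  ultimately have "e i x = inverse t *s (co c (e i x) *s e i (v c))" by simp
  then show ?thesis using span_scale[OF span_base[OF singletonI[of "e i (v c)"]], of "inverse t * co c (e i x)"] by simp
qed

context
  fixes h h' :: "nat \<Rightarrow> 'g::group_add"
  assumes gr: "\<And>\<sigma>. \<Phi> ` ENDdeg \<rho> n (*s) v h \<sigma> = ENDdeg \<rho> n (*s) v h' \<sigma>"
begin

lemma e_deg: "i < n \<Longrightarrow> e i \<in> ENDdeg \<rho> n (*s) v h' 0"
  unfolding e_def using gr[of 0] E_deg[of i i h] refl by force

lemma fact_AC2: assumes ij: "i < n" "j < n" "\<rho> i j" and ab: "a < n" "b < n"
  and ra: "R a i" and rb: "R b j"
  shows "\<rho> a b \<and> h' a = (h i - h j) + h' b"
proof -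
  have "\<Phi> (E i j) \<in> ENDdeg \<rho> n (*s) v h' (h i - h j)"
    using gr[of "h i - h j"] E_deg[OF ij, of h] by force
  then show ?thesis using fact_AC[OF assms] ab by (auto simp: ENDdeg_iff ENDF_iff)
qed

definition ai where "ai i = (SOME a. a < n \<and> R a i)"
lemma ai: "i < n \<Longrightarrow> ai i < n \<and> R (ai i) i"
  unfolding ai_def using someI_ex[OF R_exists_a] by blast

definition key where "key a = (cls \<rho> n a, h' a)"
definition Ba where "Ba k = {a \<in> {0..<n}. key a = k}"
definition Bi where "Bi k = {i \<in> {0..<n}. key (ai i) = k}"

lemma off_block: assumes i: "i < n" and a: "a \<in> Ba k" and b: "b \<in> Ba k" and nk: "key (ai i) \<noteq> k"
  shows "M (e i) a b = 0"
proof (rule ccontr)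
  assume nz: "M (e i) a b \<noteq> 0"
  let ?c = "ai i"
  have c: "?c < n" "R ?c i" using ai[OF i] by auto
  have an: "a < n" and bn: "b < n" using a b by (auto simp: Ba_def)
  obtain t where t: "t \<noteq> 0" "\<And>x. e i (E ?c ?c (e i x)) = t *s e i x" using R_corner[OF i c(1) c(2)] by blast
  have tv: "t *s e i (v b) = M (e i) ?c b *s e i (v ?c)"
    using t(2)[of "v b"] lin_scale[OF e_lin[OF i]] by (simp add: E_def M_def)
  have "t * M (e i) a b = M (e i) ?c b * M (e i) a ?c"
    using arg_cong[OF tv, of "co a"] by (simp add: co_scale M_def)
  then have nz2: "M (e i) ?c b \<noteq> 0" "M (e i) a ?c \<noteq> 0" using t nz by auto
  have ed: "e i \<in> ENDdeg \<rho> n (*s) v h' 0" by (rule e_deg[OF i])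
  then have r1: "\<rho> a ?c" "h' a = h' ?c" and r2: "\<rho> ?c b"
    using nz2 an bn c by (auto simp: ENDdeg_iff ENDF_iff)
  have "cls \<rho> n a = cls \<rho> n b" "h' a = h' b" using a b by (auto simp: Ba_def key_def)
  then have "\<rho> b a" using cls_eq an bn by blast
  then have "\<rho> ?c a" using T[OF c(1) bn an r2] by blast
  then have "cls \<rho> n ?c = cls \<rho> n a" using cls_eq an c r1 by blast
  then have "key ?c = key a" using r1 by (simp add: key_def)
  then show False using a nk by (simp add: Ba_def)
qed


definition proj where "proj k u = (\<Sum>a\<in>Ba k. co a u *s v a)"

lemma Ba_sub: "Ba k \<subseteq> {0..<n}" by (auto simp: Ba_def)
lemma fin_Ba: "finite (Ba k)" by (auto simp: Ba_def)
lemma fin_Bi: "finite (Bi k)" by (auto simp: Bi_def)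

lemma proj_lin: "lin (proj k)"
  unfolding lin_iff proj_def
  by (simp add: co_add co_scale scale_left_distrib sum.distrib scale_sum_right)

lemma proj_v: assumes a: "a \<in> Ba k" shows "proj k (v a) = v a"
proof -
  have an: "a < n" using a by (auto simp: Ba_def)
  have "proj k (v a) = (\<Sum>a'\<in>Ba k. (if a' = a then v a' else 0))"
    unfolding proj_def
  proof (rule sum.cong[OF HOL.refl])
    fix a' assume "a' \<in> Ba k"
    then have "a' < n" by (auto simp: Ba_def)
    then show "co a' (v a) *s v a' = (if a' = a then v a' else 0)" using an by (simp add: co_v)
  qed
  also have "\<dots> = v a" using a fin_Ba by (simp add: sum.delta')
  finally show ?thesis .
qed

lemma count_le: "card (Ba k) \<le> card (Bi k)"
proof -
  define Y where "Y = (\<lambda>i. proj k (e i (v (ai i)))) ` Bi k"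
  have finY: "finite Y" using fin_Bi by (simp add: Y_def)
  have inY: "v a \<in> span Y" if a: "a \<in> Ba k" for a
  proof -
    have an: "a < n" using a by (auto simp: Ba_def)
    have "v a = proj k (v a)" using proj_v[OF a] by simp
    also have "\<dots> = proj k (\<Sum>i<n. e i (v a))" using e_sum by simp
    also have "\<dots> = (\<Sum>i<n. proj k (e i (v a)))" by (rule lin_sum[OF proj_lin])
    also have "\<dots> \<in> span Y"
    proof (rule span_sum)
      fix i assume "i \<in> {..<n}"
      then have i: "i < n" by simp
      show "proj k (e i (v a)) \<in> span Y"
      proof (cases "key (ai i) = k")
        case True
        then have iB: "i \<in> Bi k" using i by (simp add: Bi_def)
        have "e i (v a) \<in> span {e i (v (ai i))}" using e_range[OF i] ai[OF i] by blast
        then obtain s where s: "e i (v a) = s *s e i (v (ai i))" by (auto simp: span_singleton)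
        have "proj k (e i (v a)) = s *s proj k (e i (v (ai i)))"
          using s lin_scale[OF proj_lin] by simp
        moreover have "proj k (e i (v (ai i))) \<in> Y" using iB by (simp add: Y_def)
        ultimately show ?thesis by (simp add: span_base span_scale)
      next
        case False
        have "proj k (e i (v a)) = (\<Sum>a'\<in>Ba k. M (e i) a' a *s v a')"
          by (simp add: proj_def M_def)
        also have "\<dots> = 0"
          using off_block[OF i _ a False] by simp
        finally show ?thesis by (simp add: span_zero)
      qed
    qed
    finally show ?thesis .
  qed
  have sub: "v ` Ba k \<subseteq> span Y" using inY by auto
  have "v ` Ba k \<subseteq> BB" unfolding BB_def by (rule image_mono[OF Ba_sub])
  then have ind: "independent (v ` Ba k)" by (rule independent_mono[OF indepB])
  have "card (v ` Ba k) \<le> card Y" using independent_span_bound[OF finY ind sub] by simp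
  also have "\<dots> \<le> card (Bi k)" unfolding Y_def by (rule card_image_le[OF fin_Bi])
  finally have "card (v ` Ba k) \<le> card (Bi k)" .
  moreover have "card (v ` Ba k) = card (Ba k)"
    by (rule card_image) (rule inj_on_subset[OF inj Ba_sub])
  ultimately show ?thesis by simp
qed

definition KK where "KK = key ` {0..<n}"

lemma count_eq: assumes k: "k \<in> KK" shows "card (Ba k) = card (Bi k)"
proof -
  have finK: "finite KK" by (simp add: KK_def)
  have s1: "(\<Sum>k\<in>KK. card (Ba k)) = n"
  proof -
    have "(\<Sum>x\<in>{0..<n}. (\<lambda>_. 1::nat) (key x)) = (\<Sum>y\<in>KK. of_nat (card {x \<in> {0..<n}. key x = y}) * (\<lambda>_. 1) y)"
      by (rule sum_fun_comp) (auto simp: KK_def)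
    then show ?thesis by (simp add: Ba_def)
  qed
  have s2: "(\<Sum>k\<in>KK. card (Bi k)) = n"
  proof -
    have "(\<Sum>x\<in>{0..<n}. (\<lambda>_. 1::nat) ((\<lambda>i. key (ai i)) x)) = (\<Sum>y\<in>KK. of_nat (card {x \<in> {0..<n}. (\<lambda>i. key (ai i)) x = y}) * (\<lambda>_. 1) y)"
      by (rule sum_fun_comp) (use ai in \<open>auto simp: KK_def\<close>)
    then show ?thesis by (simp add: Bi_def)
  qed
  show ?thesis
    by (rule sum_mono_inv[of "\<lambda>k. card (Ba k)" KK "\<lambda>k. card (Bi k)"]) (use s1 s2 count_le k finK in auto)
qed

lemma exists_pi: "\<exists>\<pi>. bij_betw \<pi> {0..<n} {0..<n} \<and>
   (\<forall>i<n. \<forall>j<n. \<rho> i j \<longrightarrow> \<rho> (\<pi> i) (\<pi> j) \<and> h' (\<pi> i) = (h i - h j) + h' (\<pi> j))"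
proof -
  have "\<forall>k\<in>KK. \<exists>f. bij_betw f (Bi k) (Ba k)"
    using finite_same_card_bij[OF fin_Bi fin_Ba] count_eq by metis
  then obtain F where F: "\<And>k. k \<in> KK \<Longrightarrow> bij_betw (F k) (Bi k) (Ba k)" using bchoice by metis
  define \<pi> where "\<pi> i = F (key (ai i)) i" for i
  have pB: "\<pi> i \<in> Ba (key (ai i))" if i: "i < n" for i
  proof -
    have "key (ai i) \<in> KK" using ai[OF i] by (auto simp: KK_def)
    moreover have "i \<in> Bi (key (ai i))" using i by (simp add: Bi_def)
    ultimately show ?thesis using F unfolding \<pi>_def bij_betw_def by blast
  qed
  have pn: "\<pi> i < n" and pk: "key (\<pi> i) = key (ai i)" if "i < n" for i
    using pB[OF that] by (auto simp: Ba_def)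
  have inj: "inj_on \<pi> {0..<n}"
  proof (rule inj_onI)
    fix i j assume i: "i \<in> {0..<n}" and j: "j \<in> {0..<n}" and eq: "\<pi> i = \<pi> j"
    have kk: "key (ai i) = key (ai j)" using pk[of i] pk[of j] i j eq by simp
    have K: "key (ai i) \<in> KK" using ai i by (auto simp: KK_def)
    have "i \<in> Bi (key (ai i))" "j \<in> Bi (key (ai i))" using i j kk by (auto simp: Bi_def)
    moreover have "F (key (ai i)) i = F (key (ai i)) j" using eq kk by (simp add: \<pi>_def)
    ultimately show "i = j" using F[OF K] unfolding bij_betw_def inj_on_def by blast
  qed
  have bij: "bij_betw \<pi> {0..<n} {0..<n}"
  proof -
    have "\<pi> ` {0..<n} \<subseteq> {0..<n}" using pn by auto
    then have "\<pi> ` {0..<n} = {0..<n}" using endo_inj_surj[of "{0..<n}" \<pi>] inj by simp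
    then show ?thesis using inj by (simp add: bij_betw_def)
  qed
  have main: "\<rho> (\<pi> i) (\<pi> j) \<and> h' (\<pi> i) = (h i - h j) + h' (\<pi> j)" if ij: "i < n" "j < n" "\<rho> i j" for i j
  proof -
    have ai_i: "ai i < n" "R (ai i) i" and ai_j: "ai j < n" "R (ai j) j" using ai ij by auto
    have AC: "\<rho> (ai i) (ai j) \<and> h' (ai i) = (h i - h j) + h' (ai j)"
      by (rule fact_AC2[OF ij ai_i(1) ai_j(1) ai_i(2) ai_j(2)])
    have ci: "cls \<rho> n (\<pi> i) = cls \<rho> n (ai i)" "h' (\<pi> i) = h' (ai i)"
      using pk[OF ij(1)] by (auto simp: key_def)
    have cj: "cls \<rho> n (\<pi> j) = cls \<rho> n (ai j)" "h' (\<pi> j) = h' (ai j)"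
      using pk[OF ij(2)] by (auto simp: key_def)
    have r1: "\<rho> (\<pi> i) (ai i)" using cls_eq[OF pn[OF ij(1)] ai_i(1)] ci by simp
    have r2: "\<rho> (ai j) (\<pi> j)" using cls_eq[OF pn[OF ij(2)] ai_j(1)] cj by simp
    have "\<rho> (\<pi> i) (ai j)" using T[OF pn[OF ij(1)] ai_i(1) ai_j(1) r1] AC by simp
    then have "\<rho> (\<pi> i) (\<pi> j)" using T[OF pn[OF ij(1)] ai_j(1) pn[OF ij(2)]] r2 by simp
    then show ?thesis using AC ci cj by simp
  qed
  show ?thesis using bij main by blast
qed

end
end

lemma alg_dir:
  assumes au: "isauto \<Phi>" and gr: "\<And>\<sigma>. \<Phi> ` ENDdeg \<rho> n (*s) v h \<sigma> = ENDdeg \<rho> n (*s) v h' \<sigma>"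
  shows "\<exists>\<pi>. bij_betw \<pi> {0..<n} {0..<n} \<and>
   (\<forall>i<n. \<forall>j<n. \<rho> i j \<longrightarrow> \<rho> (\<pi> i) (\<pi> j) \<and> h' (\<pi> i) = (h i - h j) + h' (\<pi> j))"
  by (rule exists_pi[OF au gr])


section \<open>Conjugation by a permutation of the basis\<close>

definition Ut where "Ut k u = (\<Sum>b<n. co (k b) u *s v b)"
definition Us where "Us k u = (\<Sum>b<n. co b u *s v (k b))"

lemma Ut_lin: "lin (Ut k)"
  unfolding lin_iff Ut_def
  by (simp add: co_add co_scale scale_left_distrib sum.distrib scale_sum_right)
lemma Us_lin: "lin (Us k)"
  unfolding lin_iff Us_def
  by (simp add: co_add co_scale scale_left_distrib sum.distrib scale_sum_right)

context
  fixes k assumes kb: "bij_betw k {0..<n} {0..<n}"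
begin

lemma k_lt: "a < n \<Longrightarrow> k a < n" using kb by (auto simp: bij_betw_def)
lemma k_inj: "a < n \<Longrightarrow> b < n \<Longrightarrow> k a = k b \<longleftrightarrow> a = b"
  using kb by (auto simp: bij_betw_def inj_on_def)
lemma k_surj: assumes c: "c < n" shows "\<exists>a<n. c = k a"
proof -
  have "c \<in> k ` {0..<n}" using kb c by (simp add: bij_betw_def)
  then show ?thesis by auto
qed

lemma sum_delta_mult: "a < n \<Longrightarrow> (\<Sum>b<n. (f b::'k) * (if a = b then 1 else 0)) = f a"
proof -
  assume a: "a < n"
  have "(\<Sum>b<n. f b * (if a = b then 1 else 0)) = (\<Sum>b<n. if a = b then f b else 0)"
    by (rule sum.cong) auto
  also have "\<dots> = f a" using a by simp
  finally show ?thesis .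
qed

lemma co_Ut: assumes a: "a < n" shows "co a (Ut k u) = co (k a) u"
  unfolding Ut_def using a by (simp add: co_sum co_scale co_v sum_delta_mult)

lemma co_Us: assumes a: "a < n" shows "co (k a) (Us k u) = co a u"
proof -
  have "co (k a) (Us k u) = (\<Sum>b<n. co b u * (if a = b then 1 else 0))"
    unfolding Us_def using a k_lt k_inj by (simp add: co_sum co_scale co_v)
  also have "\<dots> = co a u" using a by (rule sum_delta_mult)
  finally show ?thesis .
qed

lemma vec_eq_k: "(\<And>a. a < n \<Longrightarrow> co (k a) x = co (k a) y) \<Longrightarrow> x = y"
  by (rule vec_eq) (metis k_surj)

lemma Ut_Us: "Ut k (Us k u) = u"
  by (rule vec_eq) (simp add: co_Ut co_Us)
lemma Us_Ut: "Us k (Ut k u) = u"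
  by (rule vec_eq_k) (simp add: co_Ut co_Us k_lt)

lemma Us_v: "b < n \<Longrightarrow> Us k (v b) = v (k b)"
  by (rule vec_eq_k) (simp add: co_Us co_v k_lt k_inj)
lemma Ut_v: "b < n \<Longrightarrow> Ut k (v (k b)) = v b"
  by (rule vec_eq) (simp add: co_Ut co_v k_lt k_inj)

definition Cj where "Cj f = Ut k \<circ> f \<circ> Us k"
definition Cj' where "Cj' f = Us k \<circ> f \<circ> Ut k"

lemma M_Cj: "a < n \<Longrightarrow> b < n \<Longrightarrow> M (Cj f) a b = M f (k a) (k b)"
  by (simp add: Cj_def M_def co_Ut Us_v)
lemma M_Cj': "a < n \<Longrightarrow> b < n \<Longrightarrow> M (Cj' f) (k a) (k b) = M f a b"
  by (simp add: Cj'_def M_def co_Us Ut_v)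

lemma Cj_Cj': "Cj (Cj' f) = f" by (rule ext) (simp add: Cj_def Cj'_def Ut_Us)
lemma Cj'_Cj: "Cj' (Cj f) = f" by (rule ext) (simp add: Cj_def Cj'_def Us_Ut)

context
  assumes kr: "\<And>a b. a < n \<Longrightarrow> b < n \<Longrightarrow> \<rho> (k a) (k b) \<longleftrightarrow> \<rho> a b"
begin

lemma Cj_A: "f \<in> AA \<Longrightarrow> Cj f \<in> AA"
  unfolding ENDF_iff
proof (intro conjI allI impI)
  assume f: "lin f \<and> (\<forall>a<n. \<forall>b<n. M f a b \<noteq> 0 \<longrightarrow> \<rho> a b)"
  show "lin (Cj f)" unfolding Cj_def using f Ut_lin Us_lin by (auto intro!: lin_comp)
  fix a b assume a: "a < n" and b: "b < n" and nz: "M (Cj f) a b \<noteq> 0"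
  have "M f (k a) (k b) \<noteq> 0" using nz M_Cj[OF a b] by simp
  then have "\<rho> (k a) (k b)" using f k_lt[OF a] k_lt[OF b] by blast
  then show "\<rho> a b" using kr[OF a b] by simp
qed

lemma Cj'_A: "f \<in> AA \<Longrightarrow> Cj' f \<in> AA"
  unfolding ENDF_iff
proof (intro conjI allI impI)
  assume f: "lin f \<and> (\<forall>a<n. \<forall>b<n. M f a b \<noteq> 0 \<longrightarrow> \<rho> a b)"
  show "lin (Cj' f)" unfolding Cj'_def using f Ut_lin Us_lin by (auto intro!: lin_comp)
  fix c d assume c: "c < n" and d: "d < n" and nz: "M (Cj' f) c d \<noteq> 0"
  obtain a b where ab: "a < n" "b < n" "c = k a" "d = k b" using k_surj c d by metis
  then show "\<rho> c d" using f kr M_Cj' nz by auto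
qed

lemma Cj_auto: "isauto Cj"
  unfolding isauto_def
proof (intro conjI ballI allI)
  show "bij_betw Cj AA AA"
  proof (rule bij_betw_byWitness[where f'=Cj'])
    show "\<forall>a\<in>AA. Cj' (Cj a) = a" by (simp add: Cj'_Cj)
    show "\<forall>a'\<in>AA. Cj (Cj' a') = a'" by (simp add: Cj_Cj')
    show "Cj ` AA \<subseteq> AA" using Cj_A by auto
    show "Cj' ` AA \<subseteq> AA" using Cj'_A by auto
  qed
  fix f g assume f: "f \<in> AA" and g: "g \<in> AA"
  show "Cj (\<lambda>x. f x + g x) = (\<lambda>x. Cj f x + Cj g x)"
    by (rule ext) (simp add: Cj_def lin_add[OF Ut_lin])
  show "Cj (f \<circ> g) = Cj f \<circ> Cj g"
    by (rule ext) (simp add: Cj_def Us_Ut)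
next
  fix c f assume "f \<in> AA"
  show "Cj (\<lambda>x. c *s f x) = (\<lambda>x. c *s Cj f x)"
    by (rule ext) (simp add: Cj_def lin_scale[OF Ut_lin])
next
  show "Cj id = id" by (rule ext) (simp add: Cj_def Ut_Us)
qed

lemma grp: "((x::'g::group_add) - y = s) \<longleftrightarrow> x = s + y"
  by (metis add_diff_cancel diff_add_cancel)

lemma Cj_grading:
  fixes h h' :: "nat \<Rightarrow> 'g::group_add"
  assumes hd: "\<And>a b. a < n \<Longrightarrow> b < n \<Longrightarrow> \<rho> a b \<Longrightarrow> h (k a) - h (k b) = h' a - h' b"
  shows "Cj ` ENDdeg \<rho> n (*s) v h \<sigma> = ENDdeg \<rho> n (*s) v h' \<sigma>"
proof
  show "Cj ` ENDdeg \<rho> n (*s) v h \<sigma> \<subseteq> ENDdeg \<rho> n (*s) v h' \<sigma>"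
  proof
    fix y assume "y \<in> Cj ` ENDdeg \<rho> n (*s) v h \<sigma>"
    then obtain f where f: "f \<in> ENDdeg \<rho> n (*s) v h \<sigma>" "y = Cj f" by auto
    have fA: "f \<in> AA" using f by (simp add: ENDdeg_iff)
    show "y \<in> ENDdeg \<rho> n (*s) v h' \<sigma>"
      unfolding ENDdeg_iff
    proof (intro conjI allI impI)
      show "y \<in> AA" using Cj_A[OF fA] f by simp
      fix a b assume ab: "a < n" "b < n" "M y a b \<noteq> 0"
      then have nz: "M f (k a) (k b) \<noteq> 0" using f M_Cj by simp
      then have "\<rho> (k a) (k b)" "h (k a) = \<sigma> + h (k b)"
        using f ab k_lt by (auto simp: ENDdeg_iff ENDF_iff)
      then have "\<rho> a b" "h (k a) - h (k b) = \<sigma>" using kr ab grp by auto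
      then have "h' a - h' b = \<sigma>" using hd ab by simp
      then show "h' a = \<sigma> + h' b" using grp[of "h' a" "h' b" \<sigma>] by simp
    qed
  qed
next
  show "ENDdeg \<rho> n (*s) v h' \<sigma> \<subseteq> Cj ` ENDdeg \<rho> n (*s) v h \<sigma>"
  proof
    fix y assume y: "y \<in> ENDdeg \<rho> n (*s) v h' \<sigma>"
    have yA: "y \<in> AA" using y by (simp add: ENDdeg_iff)
    have "Cj' y \<in> ENDdeg \<rho> n (*s) v h \<sigma>"
      unfolding ENDdeg_iff
    proof (intro conjI allI impI)
      show "Cj' y \<in> AA" by (rule Cj'_A[OF yA])
      fix c d assume c: "c < n" and d: "d < n" and nz: "M (Cj' y) c d \<noteq> 0"
      obtain a b where ab: "a < n" "b < n" "c = k a" "d = k b" using k_surj c d by metis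
      then have nz': "M y a b \<noteq> 0" using nz M_Cj' by simp
      then have "\<rho> a b" "h' a = \<sigma> + h' b" using y ab by (auto simp: ENDdeg_iff ENDF_iff)
      then have "h (k a) - h (k b) = \<sigma>" using hd ab grp by simp
      then show "h c = \<sigma> + h d" using ab grp[of "h (k a)" "h (k b)" \<sigma>] by simp
    qed
    moreover have "y = Cj (Cj' y)" by (simp add: Cj_Cj')
    ultimately show "y \<in> Cj ` ENDdeg \<rho> n (*s) v h \<sigma>" by blast
  qed
qed

end
end

lemma conj_dir:
  fixes h h' :: "nat \<Rightarrow> 'g::group_add"
  assumes kb: "bij_betw k {0..<n} {0..<n}"
    and kr: "\<And>a b. a < n \<Longrightarrow> b < n \<Longrightarrow> \<rho> (k a) (k b) \<longleftrightarrow> \<rho> a b"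
    and hd: "\<And>a b. a < n \<Longrightarrow> b < n \<Longrightarrow> \<rho> a b \<Longrightarrow> h (k a) - h (k b) = h' a - h' b"
  shows "graded_END_iso \<rho> n (*s) v h h'"
  unfolding iso_iff using Cj_auto[OF kb kr] Cj_grading[where k=k and h=h and h'=h', OF kb kr hd] by blast


section \<open>From pi to k\<close>

lemma grp2: "((x::'g::group_add) = s + y) \<longleftrightarrow> x - y = s"
  by (metis add_diff_cancel diff_add_cancel)

lemma pi_to_k:
  fixes h h' :: "nat \<Rightarrow> 'g::group_add"
  assumes pb: "bij_betw \<pi> {0..<n} {0..<n}"
    and pr: "\<forall>i<n. \<forall>j<n. \<rho> i j \<longrightarrow> \<rho> (\<pi> i) (\<pi> j) \<and> h' (\<pi> i) = (h i - h j) + h' (\<pi> j)"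
  shows "\<exists>k. bij_betw k {0..<n} {0..<n} \<and> (\<forall>a<n. \<forall>b<n. \<rho> (k a) (k b) \<longleftrightarrow> \<rho> a b)
     \<and> (\<forall>a<n. \<forall>b<n. \<rho> a b \<longrightarrow> h (k a) - h (k b) = h' a - h' b)"
proof -
  have pinj: "inj_on \<pi> {0..<n}" and pim: "\<pi> ` {0..<n} = {0..<n}" using pb by (auto simp: bij_betw_def)
  have plt: "i < n \<Longrightarrow> \<pi> i < n" for i using pim by auto
  define Rel where "Rel = {p \<in> {0..<n} \<times> {0..<n}. \<rho> (fst p) (snd p)}"
  define m where "m = (\<lambda>p. (\<pi> (fst p), \<pi> (snd p)))"
  have finR: "finite Rel" by (simp add: Rel_def)
  have mR: "m ` Rel \<subseteq> Rel" using pr plt by (auto simp: Rel_def m_def)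
  have minj: "inj_on m Rel"
    unfolding inj_on_def Rel_def m_def using pinj by (auto simp: inj_on_def prod_eq_iff)
  have mRR: "m ` Rel = Rel" by (rule endo_inj_surj[OF finR mR minj])
  have conv: "\<rho> i j" if ij: "i < n" "j < n" "\<rho> (\<pi> i) (\<pi> j)" for i j
  proof -
    have "(\<pi> i, \<pi> j) \<in> Rel" using ij plt by (simp add: Rel_def)
    then obtain p where p: "p \<in> Rel" "m p = (\<pi> i, \<pi> j)" using mRR by (metis imageE)
    then have "\<pi> (fst p) = \<pi> i" "\<pi> (snd p) = \<pi> j" by (auto simp: m_def)
    moreover have "fst p < n" "snd p < n" using p by (auto simp: Rel_def)
    ultimately have "fst p = i" "snd p = j" using pinj ij by (auto simp: inj_on_def)
    then show ?thesis using p by (auto simp: Rel_def)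
  qed
  define k where "k = inv_into {0..<n} \<pi>"
  have kb: "bij_betw k {0..<n} {0..<n}" unfolding k_def using bij_betw_inv_into[OF pb] .
  have klt: "a < n \<Longrightarrow> k a < n" for a using kb by (auto simp: bij_betw_def)
  have pk: "a < n \<Longrightarrow> \<pi> (k a) = a" for a unfolding k_def using pim by (simp add: f_inv_into_f)
  have kr: "\<rho> (k a) (k b) \<longleftrightarrow> \<rho> a b" if ab: "a < n" "b < n" for a b
    using pr conv[OF klt[OF ab(1)] klt[OF ab(2)]] pk[OF ab(1)] pk[OF ab(2)] klt[OF ab(1)] klt[OF ab(2)]
    by metis
  have kd: "h (k a) - h (k b) = h' a - h' b" if ab: "a < n" "b < n" "\<rho> a b" for a b
  proof -
    have "\<rho> (k a) (k b)" using kr ab by simp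
    then have "h' (\<pi> (k a)) = (h (k a) - h (k b)) + h' (\<pi> (k b))" using pr klt ab by blast
    then have "h' a = (h (k a) - h (k b)) + h' b" using pk ab by simp
    then show ?thesis using grp2 by metis
  qed
  show ?thesis using kb kr kd by blast
qed


section \<open>Ranks and gtilde\<close>

lemma rank_lt: assumes f: "finite S" and i: "(i::nat) \<in> S" shows "card {j \<in> S. j < i} < card S"
proof -
  have "i \<notin> {j \<in> S. j < i}" by simp
  then have "{j \<in> S. j < i} \<noteq> S" using i by blast
  then have "{j \<in> S. j < i} \<subset> S" by auto
  then show ?thesis by (rule psubset_card_mono[OF f])
qed

lemma rank_mono: assumes f: "finite S" and a: "i \<in> S" "i' \<in> S" "(i::nat) < i'"
  shows "card {j \<in> S. j < i} < card {j \<in> S. j < i'}"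
proof -
  have "i \<in> {j \<in> S. j < i'}" "i \<notin> {j \<in> S. j < i}" using a by auto
  then have ne: "{j \<in> S. j < i} \<noteq> {j \<in> S. j < i'}" by blast
  have "{j \<in> S. j < i} \<subseteq> {j \<in> S. j < i'}" using a by auto
  then have "{j \<in> S. j < i} \<subset> {j \<in> S. j < i'}" using ne by auto
  then show ?thesis using psubset_card_mono[of "{j \<in> S. j < i'}" "{j \<in> S. j < i}"] f by auto
qed

lemma rank_inj: assumes "finite S" "i \<in> S" "i' \<in> S" "card {j \<in> S. j < i} = card {j \<in> S. j < (i'::nat)}"
  shows "i = i'"
proof (rule ccontr)
  assume "i \<noteq> i'"
  then have "i < i' \<or> i' < i" by arith
  then show False using rank_mono[of S i i'] rank_mono[of S i' i] assms by auto
qed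

lemma sl_mem: "finite T \<Longrightarrow> p < card T \<Longrightarrow> sorted_list_of_set T ! p \<in> T"
  by (metis nth_mem length_sorted_list_of_set set_sorted_list_of_set)

lemma sl_inj: "finite T \<Longrightarrow> p < card T \<Longrightarrow> q < card T \<Longrightarrow>
   sorted_list_of_set T ! p = sorted_list_of_set T ! q \<Longrightarrow> p = q"
  by (metis distinct_sorted_list_of_set length_sorted_list_of_set nth_eq_iff_index_eq)

lemma cls_fin: "finite (cls \<rho> n i)" by (rule finite_subset[OF cls_sub]) simp

lemma cls_of_mem: "m < n \<Longrightarrow> x \<in> cls \<rho> n m \<Longrightarrow> cls \<rho> n x = cls \<rho> n m"
  by (subst cls_eq) (auto simp: cls_def)

lemma mem_cls_lt: "x \<in> cls \<rho> n m \<Longrightarrow> x < n" by (auto simp: cls_def)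

context
  fixes g assumes gA: "g \<in> Aut0 \<rho> n"
begin

lemma g_bij: "bij_betw g (classes \<rho> n) (classes \<rho> n)" using gA by (simp add: Aut0_def)
lemma g_cle: "\<alpha> \<in> classes \<rho> n \<Longrightarrow> \<beta> \<in> classes \<rho> n \<Longrightarrow> cle \<rho> \<alpha> \<beta> \<longleftrightarrow> cle \<rho> (g \<alpha>) (g \<beta>)"
  using gA by (simp add: Aut0_def)
lemma g_card: "\<alpha> \<in> classes \<rho> n \<Longrightarrow> card (g \<alpha>) = card \<alpha>" using gA by (simp add: Aut0_def)
lemma g_cls: "i < n \<Longrightarrow> \<exists>m<n. g (cls \<rho> n i) = cls \<rho> n m"
proof -
  assume i: "i < n"
  have "cls \<rho> n i \<in> classes \<rho> n" using i by (auto simp: classes_iff)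
  then have "g (cls \<rho> n i) \<in> classes \<rho> n" using g_bij by (auto simp: bij_betw_def)
  then show ?thesis by (simp add: classes_iff)
qed

abbreviation gt where "gt \<equiv> gtilde \<rho> n g"

lemma gt_mem: assumes i: "i < n" shows "gt i \<in> g (cls \<rho> n i)"
proof -
  obtain m where m: "m < n" "g (cls \<rho> n i) = cls \<rho> n m" using g_cls[OF i] by auto
  have ci: "cls \<rho> n i \<in> classes \<rho> n" using i by (auto simp: classes_iff)
  have "card {j \<in> cls \<rho> n i. j < i} < card (cls \<rho> n i)" by (rule rank_lt[OF cls_fin cls_mem[OF i]])
  then have "card {j \<in> cls \<rho> n i. j < i} < card (g (cls \<rho> n i))" using g_card[OF ci] by simp
  then show ?thesis unfolding gtilde_def using sl_mem[of "g (cls \<rho> n i)"] m cls_fin by simp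
qed

lemma gt_cls: assumes i: "i < n" shows "cls \<rho> n (gt i) = g (cls \<rho> n i)"
proof -
  obtain m where m: "m < n" "g (cls \<rho> n i) = cls \<rho> n m" using g_cls[OF i] by auto
  show ?thesis using cls_of_mem[OF m(1)] gt_mem[OF i] m by simp
qed

lemma gt_lt: assumes i: "i < n" shows "gt i < n"
proof -
  obtain m where m: "m < n" "g (cls \<rho> n i) = cls \<rho> n m" using g_cls[OF i] by auto
  show ?thesis using gt_mem[OF i] m mem_cls_lt by simp
qed

lemma gt_inj: "inj_on gt {0..<n}"
proof (rule inj_onI)
  fix i j assume i: "i \<in> {0..<n}" and j: "j \<in> {0..<n}" and eq: "gt i = gt j"
  have in_: "i < n" "j < n" using i j by auto
  have "g (cls \<rho> n i) = g (cls \<rho> n j)" using gt_cls[OF in_(1)] gt_cls[OF in_(2)] eq by simp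
  moreover have "cls \<rho> n i \<in> classes \<rho> n" "cls \<rho> n j \<in> classes \<rho> n" using in_ by (auto simp: classes_iff)
  ultimately have ceq: "cls \<rho> n i = cls \<rho> n j" using g_bij by (auto simp: bij_betw_def inj_on_def)
  let ?T = "g (cls \<rho> n i)"
  obtain m where m: "m < n" "?T = cls \<rho> n m" using g_cls[OF in_(1)] by auto
  have finT: "finite ?T" using m cls_fin by simp
  have ci: "cls \<rho> n i \<in> classes \<rho> n" using in_ by (auto simp: classes_iff)
  have r1: "card {x \<in> cls \<rho> n i. x < i} < card ?T"
    using rank_lt[OF cls_fin cls_mem[OF in_(1)]] g_card[OF ci] by simp
  have r2: "card {x \<in> cls \<rho> n i. x < j} < card ?T"
    using rank_lt[OF cls_fin cls_mem[OF in_(2)]] g_card[OF ci] ceq by simp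
  have "sorted_list_of_set ?T ! card {x \<in> cls \<rho> n i. x < i} = sorted_list_of_set ?T ! card {x \<in> cls \<rho> n i. x < j}"
    using eq ceq by (simp add: gtilde_def)
  then have "card {x \<in> cls \<rho> n i. x < i} = card {x \<in> cls \<rho> n i. x < j}"
    using sl_inj[OF finT r1 r2] by simp
  then show "i = j" using rank_inj[OF cls_fin cls_mem[OF in_(1)]] cls_mem[OF in_(2)] ceq by metis
qed

lemma gt_bij: "bij_betw gt {0..<n} {0..<n}"
proof -
  have "gt ` {0..<n} \<subseteq> {0..<n}" using gt_lt by auto
  then have "gt ` {0..<n} = {0..<n}" using endo_inj_surj gt_inj by blast
  then show ?thesis using gt_inj by (simp add: bij_betw_def)
qed

end


end

context fsetup begin
section \<open>Orbit condition versus k\<close>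

lemma comparable_sym: "comparable \<rho> n \<alpha> \<beta> \<Longrightarrow> comparable \<rho> n \<beta> \<alpha>"
  by (auto simp: comparable_def)

lemma comp_eq: assumes a: "a < n" and b: "b < n" and r: "\<rho> a b"
  shows "component \<rho> n (cls \<rho> n a) = component \<rho> n (cls \<rho> n b)"
proof -
  have c: "comparable \<rho> n (cls \<rho> n a) (cls \<rho> n b)"
    using a b r cle_cls[OF a b] by (auto simp: comparable_def classes_iff)
  have c': "comparable \<rho> n (cls \<rho> n b) (cls \<rho> n a)" by (rule comparable_sym[OF c])
  show ?thesis unfolding component_def
  proof (intro set_eqI iffI; simp)
    fix \<beta> assume "(comparable \<rho> n)\<^sup>*\<^sup>* (cls \<rho> n a) \<beta>"
    then show "(comparable \<rho> n)\<^sup>*\<^sup>* (cls \<rho> n b) \<beta>" by (rule converse_rtranclp_into_rtranclp[where r="comparable \<rho> n", OF c'])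
  next
    fix \<beta> assume "(comparable \<rho> n)\<^sup>*\<^sup>* (cls \<rho> n b) \<beta>"
    then show "(comparable \<rho> n)\<^sup>*\<^sup>* (cls \<rho> n a) \<beta>" by (rule converse_rtranclp_into_rtranclp[where r="comparable \<rho> n", OF c])
  qed
qed

lemma cls_in: "i < n \<Longrightarrow> cls \<rho> n i \<in> classes \<rho> n" by (auto simp: classes_iff)

lemma rhs_to_k:
  fixes h h' :: "nat \<Rightarrow> 'g::group_add"
  assumes psi: "\<forall>\<alpha>\<in>classes \<rho> n. \<psi> \<alpha> permutes \<alpha>" and gA: "g \<in> Aut0 \<rho> n"
    and hf: "\<forall>i<n. h' i = h (\<psi> (g (cls \<rho> n i)) (gtilde \<rho> n g i)) + \<sigma> (component \<rho> n (cls \<rho> n i))"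
  shows "\<exists>k. bij_betw k {0..<n} {0..<n} \<and> (\<forall>a<n. \<forall>b<n. \<rho> (k a) (k b) \<longleftrightarrow> \<rho> a b)
     \<and> (\<forall>a<n. \<forall>b<n. \<rho> a b \<longrightarrow> h (k a) - h (k b) = h' a - h' b)"
proof -
  define k where "k i = \<psi> (g (cls \<rho> n i)) (gtilde \<rho> n g i)" for i
  have gcl: "g (cls \<rho> n i) \<in> classes \<rho> n" if "i < n" for i
    using g_bij[OF gA] cls_in[OF that] by (auto simp: bij_betw_def)
  have kmem: "k i \<in> g (cls \<rho> n i)" if i: "i < n" for i
    unfolding k_def by (rule permutes_in_image[OF bspec[OF psi gcl[OF i]], THEN iffD2, OF gt_mem[OF gA i]])
  have kcls: "cls \<rho> n (k i) = g (cls \<rho> n i)" if i: "i < n" for i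
  proof -
    obtain m where m: "m < n" "g (cls \<rho> n i) = cls \<rho> n m" using g_cls[OF gA i] by auto
    show ?thesis using cls_of_mem[OF m(1)] kmem[OF i] m by simp
  qed
  have klt: "k i < n" if i: "i < n" for i
  proof -
    obtain m where m: "m < n" "g (cls \<rho> n i) = cls \<rho> n m" using g_cls[OF gA i] by auto
    show ?thesis using kmem[OF i] m mem_cls_lt by simp
  qed
  have kinj: "inj_on k {0..<n}"
  proof (rule inj_onI)
    fix i j assume i: "i \<in> {0..<n}" and j: "j \<in> {0..<n}" and eq: "k i = k j"
    have in_: "i < n" "j < n" using i j by auto
    have "g (cls \<rho> n i) = g (cls \<rho> n j)" using kcls[OF in_(1)] kcls[OF in_(2)] eq by simp
    moreover have "inj_on g (classes \<rho> n)" using g_bij[OF gA] by (simp add: bij_betw_def)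
    ultimately have ceq: "cls \<rho> n i = cls \<rho> n j"
      using inj_onD cls_in[OF in_(1)] cls_in[OF in_(2)] by metis
    have "\<psi> (g (cls \<rho> n i)) (gtilde \<rho> n g i) = \<psi> (g (cls \<rho> n i)) (gtilde \<rho> n g j)"
      using eq ceq by (simp add: k_def)
    then have "gtilde \<rho> n g i = gtilde \<rho> n g j"
      using permutes_inj[OF bspec[OF psi gcl[OF in_(1)]]] by (simp add: inj_eq)
    then show "i = j" by (rule inj_onD[OF gt_inj[OF gA] _ i j])
  qed
  have kb: "bij_betw k {0..<n} {0..<n}"
  proof -
    have "k ` {0..<n} \<subseteq> {0..<n}" using klt by auto
    then have "k ` {0..<n} = {0..<n}" using endo_inj_surj kinj by blast
    then show ?thesis using kinj by (simp add: bij_betw_def)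
  qed
  have kr: "\<rho> (k a) (k b) \<longleftrightarrow> \<rho> a b" if a: "a < n" and b: "b < n" for a b
  proof -
    have e1: "\<rho> a b \<longleftrightarrow> cle \<rho> (cls \<rho> n a) (cls \<rho> n b)" using cle_cls[OF a b] by simp
    have e2: "cle \<rho> (cls \<rho> n a) (cls \<rho> n b) \<longleftrightarrow> cle \<rho> (g (cls \<rho> n a)) (g (cls \<rho> n b))"
      by (rule g_cle[OF gA cls_in[OF a] cls_in[OF b]])
    have e3: "cle \<rho> (g (cls \<rho> n a)) (g (cls \<rho> n b)) \<longleftrightarrow> cle \<rho> (cls \<rho> n (k a)) (cls \<rho> n (k b))"
      by (simp only: kcls[OF a] kcls[OF b])
    have e4: "cle \<rho> (cls \<rho> n (k a)) (cls \<rho> n (k b)) \<longleftrightarrow> \<rho> (k a) (k b)"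
      by (rule cle_cls[OF klt[OF a] klt[OF b]])
    show ?thesis using e1 e2 e3 e4 by blast
  qed
  have kd: "h (k a) - h (k b) = h' a - h' b" if a: "a < n" and b: "b < n" and r: "\<rho> a b" for a b
  proof -
    have ce: "component \<rho> n (cls \<rho> n a) = component \<rho> n (cls \<rho> n b)" by (rule comp_eq[OF a b r])
    let ?s = "\<sigma> (component \<rho> n (cls \<rho> n a))"
    have ha: "h' a = h (k a) + ?s" using hf a unfolding k_def by blast
    have "h' b = h (k b) + \<sigma> (component \<rho> n (cls \<rho> n b))" using hf b unfolding k_def by blast
    then have hb: "h' b = h (k b) + ?s" using ce by simp
    show ?thesis unfolding ha hb by (simp only: diff_conv_add_uminus minus_add add.assoc add_minus_cancel)
  qed
  show ?thesis using kb kr kd by blast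
qed

lemma k_to_rhs:
  fixes h h' :: "nat \<Rightarrow> 'g::group_add"
  assumes kb: "bij_betw k {0..<n} {0..<n}"
    and kr: "\<forall>a<n. \<forall>b<n. \<rho> (k a) (k b) \<longleftrightarrow> \<rho> a b"
    and kd: "\<forall>a<n. \<forall>b<n. \<rho> a b \<longrightarrow> h (k a) - h (k b) = h' a - h' b"
  shows "\<exists>\<psi> g \<sigma>. (\<forall>\<alpha>\<in>classes \<rho> n. \<psi> \<alpha> permutes \<alpha>) \<and> g \<in> Aut0 \<rho> n \<and>
       (\<forall>i<n. h' i = h (\<psi> (g (cls \<rho> n i)) (gtilde \<rho> n g i)) + \<sigma> (component \<rho> n (cls \<rho> n i)))"
proof -
  have klt: "a < n \<Longrightarrow> k a < n" for a using kb by (auto simp: bij_betw_def)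
  have kinj: "inj_on k {0..<n}" using kb by (simp add: bij_betw_def)
  have ksurj: "\<exists>a<n. c = k a" if c: "c < n" for c
  proof -
    have "c \<in> k ` {0..<n}" using kb c by (simp add: bij_betw_def)
    then show ?thesis by auto
  qed
  define g where "g \<alpha> = k ` \<alpha>" for \<alpha>
  have kcls: "k ` cls \<rho> n i = cls \<rho> n (k i)" if i: "i < n" for i
  proof
    show "k ` cls \<rho> n i \<subseteq> cls \<rho> n (k i)"
    proof
      fix y assume "y \<in> k ` cls \<rho> n i"
      then obtain j where j: "j \<in> cls \<rho> n i" "y = k j" by auto
      then have jn: "j < n" "\<rho> i j" "\<rho> j i" by (auto simp: cls_def)
      then show "y \<in> cls \<rho> n (k i)" using kr i j klt by (auto simp: cls_def)
    qed
  next
    show "cls \<rho> n (k i) \<subseteq> k ` cls \<rho> n i"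
    proof
      fix y assume y: "y \<in> cls \<rho> n (k i)"
      then have yn: "y < n" "\<rho> (k i) y" "\<rho> y (k i)" by (auto simp: cls_def)
      obtain j where j: "j < n" "y = k j" using ksurj[OF yn(1)] by auto
      then have "\<rho> i j" "\<rho> j i" using kr yn i by auto
      then have "j \<in> cls \<rho> n i" using j by (simp add: cls_def)
      then show "y \<in> k ` cls \<rho> n i" using j by auto
    qed
  qed
  have gA: "g \<in> Aut0 \<rho> n"
    unfolding Aut0_def
  proof (intro CollectI conjI ballI)
    show "bij_betw g (classes \<rho> n) (classes \<rho> n)"
      unfolding bij_betw_def
    proof
      show "inj_on g (classes \<rho> n)"
      proof (rule inj_onI)
        fix \<alpha> \<beta> assume a: "\<alpha> \<in> classes \<rho> n" and b: "\<beta> \<in> classes \<rho> n" and eq: "g \<alpha> = g \<beta>"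
        obtain i j where ij: "i < n" "j < n" "\<alpha> = cls \<rho> n i" "\<beta> = cls \<rho> n j" using a b by (auto simp: classes_iff)
        have "cls \<rho> n (k i) = cls \<rho> n (k j)" using eq kcls ij by (simp add: g_def)
        then have "\<rho> (k i) (k j) \<and> \<rho> (k j) (k i)" using cls_eq[OF klt[OF ij(1)] klt[OF ij(2)]] by simp
        then have "\<rho> i j \<and> \<rho> j i" using kr ij by auto
        then show "\<alpha> = \<beta>" using cls_eq[OF ij(1) ij(2)] ij(3,4) by simp
      qed
      show "g ` classes \<rho> n = classes \<rho> n"
      proof
        show "g ` classes \<rho> n \<subseteq> classes \<rho> n"
        proof
          fix \<beta> assume "\<beta> \<in> g ` classes \<rho> n"
          then obtain i where i: "i < n" "\<beta> = g (cls \<rho> n i)" by (auto simp: classes_iff)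
          then have "\<beta> = cls \<rho> n (k i)" using kcls by (simp add: g_def)
          then show "\<beta> \<in> classes \<rho> n" using klt[OF i(1)] by (auto simp: classes_iff)
        qed
        show "classes \<rho> n \<subseteq> g ` classes \<rho> n"
        proof
          fix \<beta> assume "\<beta> \<in> classes \<rho> n"
          then obtain m where m: "m < n" "\<beta> = cls \<rho> n m" by (auto simp: classes_iff)
          obtain i where i: "i < n" "m = k i" using ksurj[OF m(1)] by auto
          have "\<beta> = g (cls \<rho> n i)" using m i kcls by (simp add: g_def)
          then show "\<beta> \<in> g ` classes \<rho> n" using cls_in[OF i(1)] by blast
        qed
      qed
    qed
  next
    fix \<alpha> \<beta> assume a: "\<alpha> \<in> classes \<rho> n" and b: "\<beta> \<in> classes \<rho> n"
    obtain i j where ij: "i < n" "j < n" "\<alpha> = cls \<rho> n i" "\<beta> = cls \<rho> n j" using a b by (auto simp: classes_iff)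
    have "cle \<rho> \<alpha> \<beta> \<longleftrightarrow> \<rho> i j" using cle_cls ij by simp
    also have "\<dots> \<longleftrightarrow> \<rho> (k i) (k j)" using kr ij by simp
    also have "\<dots> \<longleftrightarrow> cle \<rho> (g \<alpha>) (g \<beta>)" using cle_cls[OF klt[OF ij(1)] klt[OF ij(2)]] kcls ij by (simp add: g_def)
    finally show "cle \<rho> \<alpha> \<beta> \<longleftrightarrow> cle \<rho> (g \<alpha>) (g \<beta>)" .
  next
    fix \<alpha> assume a: "\<alpha> \<in> classes \<rho> n"
    then have "\<alpha> \<subseteq> {0..<n}" by (auto simp: classes_iff cls_def)
    then show "card (g \<alpha>) = card \<alpha>" unfolding g_def by (rule card_image[OF inj_on_subset[OF kinj]])
  qed
  let ?gt = "gtilde \<rho> n g"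
  have gtb: "bij_betw ?gt {0..<n} {0..<n}" by (rule gt_bij[OF gA])
  have gtinj: "inj_on ?gt {0..<n}" by (rule gt_inj[OF gA])
  define \<psi> where "\<psi> \<beta> y = (if y \<in> \<beta> then k (inv_into {0..<n} ?gt y) else y)" for \<beta> y
  have inv_lt: "inv_into {0..<n} ?gt y < n" and inv_gt: "?gt (inv_into {0..<n} ?gt y) = y" if y: "y < n" for y
  proof -
    have "y \<in> ?gt ` {0..<n}" using gtb y by (simp add: bij_betw_def)
    then show "inv_into {0..<n} ?gt y < n" "?gt (inv_into {0..<n} ?gt y) = y"
      using inv_into_into[of y ?gt "{0..<n}"] f_inv_into_f[of y ?gt "{0..<n}"] by auto
  qed
  have psi: "\<psi> \<beta> permutes \<beta>" if bc: "\<beta> \<in> classes \<rho> n" for \<beta>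
  proof -
    obtain m where m: "m < n" "\<beta> = cls \<rho> n m" using bc by (auto simp: classes_iff)
    have fin: "finite \<beta>" using m cls_fin by simp
    have into: "\<psi> \<beta> y \<in> \<beta>" if y: "y \<in> \<beta>" for y
    proof -
      have yn: "y < n" using y m mem_cls_lt by simp
      let ?j = "inv_into {0..<n} ?gt y"
      have "cls \<rho> n y = cls \<rho> n (k ?j)"
        using gt_cls[OF gA inv_lt[OF yn]] inv_gt[OF yn] kcls[OF inv_lt[OF yn]] by (simp add: g_def)
      moreover have "cls \<rho> n y = \<beta>" using cls_of_mem[OF m(1)] y m by simp
      ultimately have "k ?j \<in> \<beta>" using cls_mem[OF klt[OF inv_lt[OF yn]]] by simp
      then show ?thesis using y by (simp add: \<psi>_def)
    qed
    have inj\<psi>: "inj_on (\<psi> \<beta>) \<beta>"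
    proof (rule inj_onI)
      fix y1 y2 assume y1: "y1 \<in> \<beta>" and y2: "y2 \<in> \<beta>" and eq: "\<psi> \<beta> y1 = \<psi> \<beta> y2"
      have yn: "y1 < n" "y2 < n" using y1 y2 m mem_cls_lt by auto
      have "k (inv_into {0..<n} ?gt y1) = k (inv_into {0..<n} ?gt y2)" using eq y1 y2 by (simp add: \<psi>_def)
      then have "inv_into {0..<n} ?gt y1 = inv_into {0..<n} ?gt y2"
        using kinj inv_lt[OF yn(1)] inv_lt[OF yn(2)] by (auto simp: inj_on_def)
      then have "?gt (inv_into {0..<n} ?gt y1) = ?gt (inv_into {0..<n} ?gt y2)" by simp
    then show "y1 = y2" using inv_gt[OF yn(1)] inv_gt[OF yn(2)] by simp
    qed
    have "\<psi> \<beta> ` \<beta> \<subseteq> \<beta>" using into by auto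
    then have "\<psi> \<beta> ` \<beta> = \<beta>" using endo_inj_surj[OF fin _ inj\<psi>] by simp
    then have "bij_betw (\<psi> \<beta>) \<beta> \<beta>" using inj\<psi> by (simp add: bij_betw_def)
    then show ?thesis by (rule bij_imp_permutes) (simp add: \<psi>_def)
  qed
  define s where "s j = - h (k j) + h' j" for j
  have s_rho: "s a = s b" if a: "a < n" and b: "b < n" and r: "\<rho> a b" for a b
  proof -
    have "h (k a) - h (k b) = h' a - h' b" using kd a b r by simp
    then have "h' a = (h (k a) - h (k b)) + h' b" by simp
    then show ?thesis by (simp only: s_def diff_conv_add_uminus add.assoc minus_add_cancel)
  qed
  have s_comp: "\<forall>j<n. \<beta> = cls \<rho> n j \<longrightarrow> s j = s i"
    if rt: "(comparable \<rho> n)\<^sup>*\<^sup>* (cls \<rho> n i) \<beta>" and i: "i < n" for i \<beta>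
    using rt
  proof (induction rule: rtranclp_induct)
    case base
    show ?case
    proof (intro allI impI)
      fix j assume j: "j < n" and eq: "cls \<rho> n i = cls \<rho> n j"
      have "\<rho> i j" using cls_eq[OF i j] eq by simp
      then show "s j = s i" using s_rho[OF i j] by simp
    qed
  next
    case (step \<gamma> \<beta>)
    obtain m where m: "m < n" "\<gamma> = cls \<rho> n m" using step.hyps(2) by (auto simp: comparable_def classes_iff)
    have sm: "s m = s i" using step.IH m by simp
    show ?case
    proof (intro allI impI)
      fix j assume j: "j < n" and eq: "\<beta> = cls \<rho> n j"
      have "cle \<rho> \<gamma> \<beta> \<or> cle \<rho> \<beta> \<gamma>" using step.hyps(2) by (simp add: comparable_def)
      then have "\<rho> m j \<or> \<rho> j m" using cle_cls[OF m(1) j] cle_cls[OF j m(1)] m eq by simp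
      then have "s m = s j" using s_rho[OF m(1) j] s_rho[OF j m(1)] by auto
      then show "s j = s i" using sm by simp
    qed
  qed
  define \<sigma> where "\<sigma> C = s (SOME j. j < n \<and> C = component \<rho> n (cls \<rho> n j))" for C
  have \<sigma>s: "\<sigma> (component \<rho> n (cls \<rho> n i)) = s i" if i: "i < n" for i
  proof -
    define J where "J = (SOME j. j < n \<and> component \<rho> n (cls \<rho> n i) = component \<rho> n (cls \<rho> n j))"
    have j: "J < n \<and> component \<rho> n (cls \<rho> n i) = component \<rho> n (cls \<rho> n J)"
      unfolding J_def by (rule someI[of _ i]) (simp add: i)
    have "cls \<rho> n J \<in> component \<rho> n (cls \<rho> n J)" by (simp add: component_def)
    then have "cls \<rho> n J \<in> component \<rho> n (cls \<rho> n i)" using j by simp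
    then have "(comparable \<rho> n)\<^sup>*\<^sup>* (cls \<rho> n i) (cls \<rho> n J)" by (simp add: component_def)
    then have "\<forall>j'<n. cls \<rho> n J = cls \<rho> n j' \<longrightarrow> s j' = s i" by (rule s_comp[OF _ i])
    then have "s J = s i" using j by simp
    moreover have "\<sigma> (component \<rho> n (cls \<rho> n i)) = s J" by (simp only: \<sigma>_def J_def)
    ultimately show ?thesis by simp
  qed
  have form: "h' i = h (\<psi> (g (cls \<rho> n i)) (?gt i)) + \<sigma> (component \<rho> n (cls \<rho> n i))" if i: "i < n" for i
  proof -
    have "?gt i \<in> g (cls \<rho> n i)" by (rule gt_mem[OF gA i])
    moreover have "inv_into {0..<n} ?gt (?gt i) = i" using gtinj i by (simp add: inv_into_f_f)
    ultimately have "\<psi> (g (cls \<rho> n i)) (?gt i) = k i" by (simp add: \<psi>_def)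
    then show ?thesis using \<sigma>s[OF i] by (simp only: s_def add_minus_cancel)
  qed
  show ?thesis using psi gA form by blast
qed


lemma main:
  fixes h h' :: "nat \<Rightarrow> 'g::group_add"
  shows "graded_END_iso \<rho> n (*s) v h h' \<longleftrightarrow>
    (\<exists>\<psi> g \<sigma>. (\<forall>\<alpha>\<in>classes \<rho> n. \<psi> \<alpha> permutes \<alpha>) \<and> g \<in> Aut0 \<rho> n \<and>
       (\<forall>i<n. h' i = h (\<psi> (g (cls \<rho> n i)) (gtilde \<rho> n g i)) + \<sigma> (component \<rho> n (cls \<rho> n i))))"
proof
  assume "graded_END_iso \<rho> n (*s) v h h'"
  then obtain \<Phi> where au: "isauto \<Phi>" and gr: "\<forall>\<sigma>. \<Phi> ` ENDdeg \<rho> n (*s) v h \<sigma> = ENDdeg \<rho> n (*s) v h' \<sigma>"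
    unfolding iso_iff by blast
  obtain \<pi> where pb: "bij_betw \<pi> {0..<n} {0..<n}"
    and pr: "\<forall>i<n. \<forall>j<n. \<rho> i j \<longrightarrow> \<rho> (\<pi> i) (\<pi> j) \<and> h' (\<pi> i) = (h i - h j) + h' (\<pi> j)"
    using alg_dir[OF au] gr by blast
  obtain k where kb: "bij_betw k {0..<n} {0..<n}" and kr: "\<forall>a<n. \<forall>b<n. \<rho> (k a) (k b) \<longleftrightarrow> \<rho> a b"
    and kd: "\<forall>a<n. \<forall>b<n. \<rho> a b \<longrightarrow> h (k a) - h (k b) = h' a - h' b"
    using pi_to_k[OF pb pr] by blast
  show "\<exists>\<psi> g \<sigma>. (\<forall>\<alpha>\<in>classes \<rho> n. \<psi> \<alpha> permutes \<alpha>) \<and> g \<in> Aut0 \<rho> n \<and>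
       (\<forall>i<n. h' i = h (\<psi> (g (cls \<rho> n i)) (gtilde \<rho> n g i)) + \<sigma> (component \<rho> n (cls \<rho> n i)))"
    by (rule k_to_rhs[OF kb kr kd])
next
  assume "\<exists>\<psi> g \<sigma>. (\<forall>\<alpha>\<in>classes \<rho> n. \<psi> \<alpha> permutes \<alpha>) \<and> g \<in> Aut0 \<rho> n \<and>
       (\<forall>i<n. h' i = h (\<psi> (g (cls \<rho> n i)) (gtilde \<rho> n g i)) + \<sigma> (component \<rho> n (cls \<rho> n i)))"
  then obtain \<psi> g \<sigma> where psi: "\<forall>\<alpha>\<in>classes \<rho> n. \<psi> \<alpha> permutes \<alpha>" and gA: "g \<in> Aut0 \<rho> n"
    and hf: "\<forall>i<n. h' i = h (\<psi> (g (cls \<rho> n i)) (gtilde \<rho> n g i)) + \<sigma> (component \<rho> n (cls \<rho> n i))"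
    by blast
  obtain k where kb: "bij_betw k {0..<n} {0..<n}" and kr: "\<forall>a<n. \<forall>b<n. \<rho> (k a) (k b) \<longleftrightarrow> \<rho> a b"
    and kd: "\<forall>a<n. \<forall>b<n. \<rho> a b \<longrightarrow> h (k a) - h (k b) = h' a - h' b"
    using rhs_to_k[OF psi gA hf] by blast
  show "graded_END_iso \<rho> n (*s) v h h'"
    by (rule conj_dir[OF kb]) (use kr kd in auto)
qed

end

theorem theorem7p1:
  fixes \<rho> :: "nat \<Rightarrow> nat \<Rightarrow> bool" and n :: nat
    and scale :: "'k::field \<Rightarrow> 'v::ab_group_add \<Rightarrow> 'v" and v :: "nat \<Rightarrow> 'v"
    and h h' :: "nat \<Rightarrow> 'g::group_add"
  assumes refl: "\<forall>i<n. \<rho> i i"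
    and trans: "\<forall>i<n. \<forall>j<n. \<forall>k<n. \<rho> i j \<and> \<rho> j k \<longrightarrow> \<rho> i k"
    and vs: "vector_space scale"
    and inj: "inj_on v {0..<n}"
    and indep: "\<not> Modules.module.dependent scale (v ` {0..<n})"
    and spans: "Modules.module.span scale (v ` {0..<n}) = UNIV"
  shows "graded_END_iso \<rho> n scale v h h' \<longleftrightarrow>
    (\<exists>\<psi> g \<sigma>. (\<forall>\<alpha>\<in>classes \<rho> n. \<psi> \<alpha> permutes \<alpha>) \<and> g \<in> Aut0 \<rho> n \<and>
       (\<forall>i<n. h' i = h (\<psi> (g (cls \<rho> n i)) (gtilde \<rho> n g i)) + \<sigma> (component \<rho> n (cls \<rho> n i))))"
proof -
  interpret F: fsetup scale \<rho> n v
    by (rule fsetup.intro[OF vs fsetup_axioms.intro[OF refl trans inj indep spans]])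
  show ?thesis by (rule F.main)
qed

end
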